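(* For every field $\mathbb{F}$, all $n,d\ge1$ and every tensor $A:[n]^{2d}\to\mathbb{F}$, we have $\mathcal L_{\mathsf{nc,sm}}(A^\flat)\ge n^{\log_2 d}\,\rho(A)$.
   Context: For $a,b\in\{0,1\}$ and $\alpha\in\{0,1\}^{d-1}$ define the partition $I_{a,\alpha,b}\sqcup J_{a,\alpha,b}=[2d]$ by $I_{a,\alpha,b}=[2d]\cap\{a,\,2+\alpha_1,\,4+\alpha_2,\dots,2d-2+\alpha_{d-1},\,2d+b\}$ and $J_{a,\alpha,b}=[2d]\cap\{1-a,\,3-\alpha_1,\,5-\alpha_2,\dots,2d-1-\alpha_{d-1},\,2d+1-b\}$. For $A:[n]^{2d}\to\mathbb{F}$ and a partition $I\sqcup J=[2d]$, $\mathrm{Mat}_{I,J}(A)$ is the $n^{|I|}\times n^{|J|}$ flattening (rows indexed by coordinates in $I$, columns by those in $J$). $\mathrm{relrk}_{a,\alpha,b}(A)=n^{-d}\mathrm{rank}(\mathrm{Mat}_{I_{a,\alpha,b},J_{a,\alpha,b}}(A))$, and \[\rho(A)=\max_{a,b\in\{0,1\}}\ \min_{\{X_\alpha\}}\ \sum_{\alpha\in\{0,1\}^{d-1}}\mathrm{relrk}_{a,\alpha,b}(X_\alpha),\] the minimum over families of tensors $X_\alpha:[n]^{2d}\to\mathbb{F}$ with $A=\sum_\alpha X_\alpha$. The flattening $A^\flat:[n^2]^d\to\mathbb{F}$ is $A^\flat(\langle a_1,b_1\rangle,\dots,\langle a_d,b_d\rangle)=A(a_1,b_1,\dots,a_d,b_d)$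 with $\langle a,b\rangle=(a-1)n+b$. Non-commutative set-multilinear formula size of $B:[N]^k\to\mathbb{F}$: if $k=1$, $\mathcal L_{\mathsf{nc,sm}}(B)=1$ if $B\ne0$ and $0$ otherwise; if $k\ge2$ it is the minimum of $\sum_i(\mathcal L_{\mathsf{nc,sm}}(B_i)+\mathcal L_{\mathsf{nc,sm}}(C_i))$ over finite families with positive $e_i+f_i=k$, $B_i:[N]^{e_i}\to\mathbb{F}$, $C_i:[N]^{f_i}\to\mathbb{F}$, $B=\sum_iB_i\otimes C_i$ (concatenating coordinates in order). *)

theory Defs
  imports Complex_Main "Jordan_Normal_Form.DL_Rank"
begin

text \<open>A tensor of order k over [N] = {1..N} is a function
  B :: nat list => 'a; only its values on lists of length k with entries in {1..N}
  (the domain, see tdom) are meaningful. Coordinates of a tensor are numbered 1..k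
  (position p of the index list is entry number p-1 of the list).\<close>

definition tdom :: "nat \<Rightarrow> nat \<Rightarrow> nat list set" where
  "tdom N k = {xs. length xs = k \<and> set xs \<subseteq> {1..N}}"

definition tprod :: "nat \<Rightarrow> (nat list \<Rightarrow> 'a::field) \<Rightarrow> (nat list \<Rightarrow> 'a) \<Rightarrow> nat list \<Rightarrow> 'a" where
  "tprod e B C = (\<lambda>xs. B (take e xs) * C (drop e xs))"

definition digit :: "nat \<Rightarrow> nat \<Rightarrow> nat \<Rightarrow> nat" where
  "digit n r j = r div n ^ j mod n + 1"

text \<open>Row r / column c of Mat_{I,J} (0-based) correspond to the assignments of
  values in [n] to the coordinates in I resp. J given by mixed-radix digits
  (the coordinates of I are ordered increasingly).\<close>
definition flat_index :: "nat \<Rightarrow> nat \<Rightarrow> nat set \<Rightarrow> nat set \<Rightarrow> nat \<Rightarrow> nat \<Rightarrow> nat list" where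
  "flat_index n k I J r c =
     map (\<lambda>p. if p \<in> I then digit n r (card {q \<in> I. q < p})
               else digit n c (card {q \<in> J. q < p})) [1..<k+1]"

definition Mat_flat :: "nat \<Rightarrow> nat \<Rightarrow> nat set \<Rightarrow> nat set \<Rightarrow> (nat list \<Rightarrow> 'a::field) \<Rightarrow> 'a mat" where
  "Mat_flat n k I J A = mat (n ^ card I) (n ^ card J) (\<lambda>(r, c). A (flat_index n k I J r c))"

definition mrank :: "'a::field mat \<Rightarrow> nat" where
  "mrank M = vec_space.rank (dim_row M) M"

text \<open>The partition I_{a,alpha,b}, J_{a,alpha,b} of [2d]; alpha is a 0/1 list of
  length d-1, alpha_i = alpha ! (i-1).\<close>
definition Ipart :: "nat \<Rightarrow> nat \<Rightarrow> nat list \<Rightarrow> nat \<Rightarrow> nat set" where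
  "Ipart d a \<alpha> b = {1..2*d} \<inter> ({a} \<union> {2*i + \<alpha> ! (i-1) | i. 1 \<le> i \<and> i \<le> d - 1} \<union> {2*d + b})"

definition Jpart :: "nat \<Rightarrow> nat \<Rightarrow> nat list \<Rightarrow> nat \<Rightarrow> nat set" where
  "Jpart d a \<alpha> b = {1..2*d} \<inter> ({1 - a} \<union> {2*i + 1 - \<alpha> ! (i-1) | i. 1 \<le> i \<and> i \<le> d - 1} \<union> {2*d + 1 - b})"

definition alphas :: "nat \<Rightarrow> nat list set" where
  "alphas d = {\<alpha>. length \<alpha> = d - 1 \<and> set \<alpha> \<subseteq> {0, 1}}"

definition relrk :: "nat \<Rightarrow> nat \<Rightarrow> nat \<Rightarrow> nat list \<Rightarrow> nat \<Rightarrow> (nat list \<Rightarrow> 'a::field) \<Rightarrow> real" where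
  "relrk n d a \<alpha> b A =
     real (mrank (Mat_flat n (2*d) (Ipart d a \<alpha> b) (Jpart d a \<alpha> b) A)) / real n ^ d"

definition rho :: "nat \<Rightarrow> nat \<Rightarrow> (nat list \<Rightarrow> 'a::field) \<Rightarrow> real" where
  "rho n d A = (MAX a \<in> {0, 1}. MAX b \<in> {0, 1}.
     (INF X \<in> {X :: nat list \<Rightarrow> nat list \<Rightarrow> 'a.
                 \<forall>xs \<in> tdom n (2*d). A xs = (\<Sum>\<alpha> \<in> alphas d. X \<alpha> xs)}.
        \<Sum>\<alpha> \<in> alphas d. relrk n d a \<alpha> b (X \<alpha>)))"

text \<open>The flattening A^flat : [n^2]^d -> F, using <a,b> = (a-1)n+b, i.e.
  y in [n^2] corresponds to a = (y-1) div n + 1, b = (y-1) mod n + 1.\<close>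
definition flatten :: "nat \<Rightarrow> (nat list \<Rightarrow> 'a) \<Rightarrow> nat list \<Rightarrow> 'a" where
  "flatten n A = (\<lambda>ys. A (concat (map (\<lambda>y. [(y - 1) div n + 1, (y - 1) mod n + 1]) ys)))"

text \<open>One step of the recursive definition, given the values L e for lower orders e.\<close>
definition Lstep :: "nat \<Rightarrow> (nat \<Rightarrow> (nat list \<Rightarrow> 'a::field) \<Rightarrow> nat) \<Rightarrow> nat \<Rightarrow> (nat list \<Rightarrow> 'a) \<Rightarrow> nat" where
  "Lstep N L k B =
    (if k = 1 then (if \<exists>xs \<in> tdom N 1. B xs \<noteq> 0 then 1 else 0)
     else Inf {\<Sum>i<m. L (e i) (Bs i) + L (f i) (Cs i) | (m::nat) e f Bs Cs.
                 (\<forall>i<m. 0 < e i \<and> 0 < f i \<and> e i + f i = k) \<and>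
                 (\<forall>xs \<in> tdom N k. B xs = (\<Sum>i<m. tprod (e i) (Bs i) (Cs i) xs))})"

text \<open>Lupto N m j B is the formula size of B as an order-j tensor, valid for j < m.\<close>
primrec Lupto :: "nat \<Rightarrow> nat \<Rightarrow> nat \<Rightarrow> (nat list \<Rightarrow> 'a::field) \<Rightarrow> nat" where
  "Lupto N 0 = (\<lambda>j B. 0)"
| "Lupto N (Suc m) = (\<lambda>j B. if j < m then Lupto N m j B else Lstep N (Lupto N m) j B)"

definition Lncsm :: "nat \<Rightarrow> nat \<Rightarrow> (nat list \<Rightarrow> 'a::field) \<Rightarrow> nat" where
  "Lncsm N k B = Lupto N (Suc k) k B"

end

theory Submission
  imports Defs
begin


lemma mrank_sum_outer:
  fixes u v :: "'b \<Rightarrow> nat \<Rightarrow> 'a::field"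
  assumes "finite T"
  shows "mrank (mat R C (\<lambda>(r,c). \<Sum>t\<in>T. u t r * v t c)) \<le> card T"
  using assms
proof (induction T rule: finite_induct)
  case empty
  have "mat R C (\<lambda>(r,c). \<Sum>t\<in>{}. u t r * v t c) = (0\<^sub>m R C :: 'a mat)"
    by (rule eq_matI) auto
  then show ?case unfolding mrank_def by (simp add: vec_space.rank_0I)
next
  case (insert t T)
  have eq: "mat R C (\<lambda>(r,c). \<Sum>t\<in>insert t T. u t r * v t c) =
     mat R C (\<lambda>(r,c). u t r * v t c) + mat R C (\<lambda>(r,c). \<Sum>t\<in>T. u t r * v t c)"
    by (rule eq_matI) (simp_all add: insert)
  have 1: "mrank (mat R C (\<lambda>(r,c). u t r * v t c)) \<le> 1"
    unfolding mrank_def dim_row_mat by (rule vec_space.rank_le_1_product_entries[of _ R C]) auto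
  have c1: "mat R C (\<lambda>(r,c). u t r * v t c) \<in> carrier_mat R C" by simp
  have c2: "mat R C (\<lambda>(r,c). \<Sum>t\<in>T. u t r * v t c) \<in> carrier_mat R C" by simp
  have 2: "mrank (mat R C (\<lambda>(r,c). \<Sum>t\<in>insert t T. u t r * v t c)) \<le>
     mrank (mat R C (\<lambda>(r,c). u t r * v t c)) + mrank (mat R C (\<lambda>(r,c). \<Sum>t\<in>T. u t r * v t c))"
    unfolding eq mrank_def using vec_space.rank_subadditive[OF c1 c2] by simp
  show ?case using 1 2 insert by simp
qed

definition Idep :: "nat \<Rightarrow> nat \<Rightarrow> nat set \<Rightarrow> (nat list \<Rightarrow> 'a) \<Rightarrow> bool" where
  "Idep n K I U = (\<forall>xs\<in>tdom n K. \<forall>ys\<in>tdom n K. (\<forall>p\<in>I. xs!(p-1) = ys!(p-1)) \<longrightarrow> U xs = U ys)"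

definition dec :: "nat \<Rightarrow> nat \<Rightarrow> nat set \<Rightarrow> nat set \<Rightarrow> (nat list \<Rightarrow> 'a::field) \<Rightarrow> nat \<Rightarrow> bool" where
  "dec n K I J X r = (\<exists>T::nat set. \<exists>U V. finite T \<and> card T \<le> r \<and>
      (\<forall>t\<in>T. Idep n K I (U t) \<and> Idep n K J (V t)) \<and>
      (\<forall>xs\<in>tdom n K. X xs = (\<Sum>t\<in>T. U t xs * V t xs)))"

lemma IdepD: "Idep n K I U \<Longrightarrow> xs\<in>tdom n K \<Longrightarrow> ys\<in>tdom n K \<Longrightarrow> (\<forall>p\<in>I. xs!(p-1) = ys!(p-1)) \<Longrightarrow> U xs = U ys"
  unfolding Idep_def by blast

lemma decI:
  fixes T :: "'b set" and U V :: "'b \<Rightarrow> nat list \<Rightarrow> 'a::field"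
  assumes "finite T" "card T \<le> r" "\<And>t. t\<in>T \<Longrightarrow> Idep n K I (U t)" "\<And>t. t\<in>T \<Longrightarrow> Idep n K J (V t)"
    "\<And>xs. xs\<in>tdom n K \<Longrightarrow> X xs = (\<Sum>t\<in>T. U t xs * V t xs)"
  shows "dec n K I J X r"
proof -
  obtain h where h: "bij_betw h {0..<card T} T" using ex_bij_betw_nat_finite[OF assms(1)] by blast
  show ?thesis unfolding dec_def
  proof (intro exI conjI ballI)
    show "finite {0..<card T}" by simp
    show "card {0..<card T} \<le> r" using assms(2) by simp
    fix t assume "t \<in> {0..<card T}"
    then have "h t \<in> T" using h bij_betwE by blast
    then show "Idep n K I ((U \<circ> h) t)" "Idep n K J ((V \<circ> h) t)" using assms(3,4) by auto
  next
    fix xs assume xs: "xs \<in> tdom n K"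
    have "X xs = (\<Sum>t\<in>T. U t xs * V t xs)" using assms(5)[OF xs] .
    also have "\<dots> = (\<Sum>t\<in>{0..<card T}. (U \<circ> h) t xs * (V \<circ> h) t xs)"
      using sum.reindex_bij_betw[OF h, of "\<lambda>t. U t xs * V t xs"] by simp
    finally show "X xs = (\<Sum>t\<in>{0..<card T}. (U \<circ> h) t xs * (V \<circ> h) t xs)" .
  qed
qed

lemma dec_mono: assumes "dec n K I J X r" "r \<le> r'" shows "dec n K I J X r'"
proof -
  obtain T U V where T: "finite (T::nat set)" "card T \<le> r" "\<forall>t\<in>T. Idep n K I (U t) \<and> Idep n K J (V t)"
    "\<forall>xs\<in>tdom n K. X xs = (\<Sum>t\<in>T. U t xs * V t xs)" using assms(1) unfolding dec_def by blast
  have "card T \<le> r'" using T(2) assms(2) by simp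
  then show ?thesis unfolding dec_def using T(1,3,4) by (intro exI[of _ T] exI[of _ U] exI[of _ V]) simp
qed

lemma dec_swap: assumes "dec n K J I X r" shows "dec n K I J X r"
proof -
  obtain T U V where T: "finite (T::nat set)" "card T \<le> r" "\<forall>t\<in>T. Idep n K J (U t) \<and> Idep n K I (V t)"
    "\<forall>xs\<in>tdom n K. X xs = (\<Sum>t\<in>T. U t xs * V t xs)" using assms(1) unfolding dec_def by blast
  have "\<forall>xs\<in>tdom n K. X xs = (\<Sum>t\<in>T. V t xs * U t xs)" using T(4) by (simp add: mult.commute)
  then show ?thesis unfolding dec_def using T(1,2,3) by (intro exI[of _ T] exI[of _ V] exI[of _ U]) simp
qed

lemma dec_zero: "dec n K I J (\<lambda>_. 0) 0"
  unfolding dec_def by (rule exI[of _ "{}"]) auto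

lemma dec_add:
  assumes "dec n K I J X r1" "dec n K I J Y r2"
  shows "dec n K I J (\<lambda>xs. X xs + Y xs) (r1 + r2)"
proof -
  obtain T1 U1 V1 where 1: "finite (T1::nat set)" "card T1 \<le> r1" "\<forall>t\<in>T1. Idep n K I (U1 t) \<and> Idep n K J (V1 t)"
    "\<forall>xs\<in>tdom n K. X xs = (\<Sum>t\<in>T1. U1 t xs * V1 t xs)" using assms(1) unfolding dec_def by blast
  obtain T2 U2 V2 where 2: "finite (T2::nat set)" "card T2 \<le> r2" "\<forall>t\<in>T2. Idep n K I (U2 t) \<and> Idep n K J (V2 t)"
    "\<forall>xs\<in>tdom n K. Y xs = (\<Sum>t\<in>T2. U2 t xs * V2 t xs)" using assms(2) unfolding dec_def by blast
  show ?thesis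
  proof (rule decI[of "T1 <+> T2" _ _ _ _ "case_sum U1 U2" _ "case_sum V1 V2"])
    show "finite (T1 <+> T2)" using 1 2 by simp
    show "card (T1 <+> T2) \<le> r1 + r2" using 1 2 by (simp add: card_Plus)
    show "\<And>t. t \<in> T1 <+> T2 \<Longrightarrow> Idep n K I (case_sum U1 U2 t)" using 1 2 by auto
    show "\<And>t. t \<in> T1 <+> T2 \<Longrightarrow> Idep n K J (case_sum V1 V2 t)" using 1 2 by auto
    fix xs assume "xs \<in> tdom n K"
    then show "X xs + Y xs = (\<Sum>t\<in>T1 <+> T2. case_sum U1 U2 t xs * case_sum V1 V2 t xs)"
      using 1 2 by (simp add: sum.Plus)
  qed
qed

lemma dec_sum:
  assumes "finite F" "\<And>i. i \<in> F \<Longrightarrow> dec n K I J (X i) (r i)"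
  shows "dec n K I J (\<lambda>xs. \<Sum>i\<in>F. X i xs) (\<Sum>i\<in>F. r i)"
  using assms
proof (induction F rule: finite_induct)
  case empty
  then show ?case using dec_zero by simp
next
  case (insert x F)
  have "dec n K I J (\<lambda>xs. X x xs + (\<Sum>i\<in>F. X i xs)) (r x + (\<Sum>i\<in>F. r i))"
    by (rule dec_add) (use insert in auto)
  then show ?case using insert by simp
qed

lemma upt_shift: "[1..<K+1] = map Suc [0..<K]"
  by (simp add: map_Suc_upt)

lemma map_nth_upt: "map (\<lambda>p. xs ! (p - 1)) [1..<length xs + 1] = xs"
  unfolding upt_shift by (simp add: comp_def map_nth)

lemma dec_generic:
  fixes X :: "nat list \<Rightarrow> 'a::field"
  assumes "{1..K} \<subseteq> I \<union> J" "J \<subseteq> {1..K}"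
  shows "dec n K I J X (n ^ card J)"
proof -
  have fJ: "finite J" using assms(2) finite_subset by blast
  define T :: "(nat \<Rightarrow> nat) set" where "T = PiE J (\<lambda>_. {1..n})"
  define U :: "(nat \<Rightarrow> nat) \<Rightarrow> nat list \<Rightarrow> 'a" where "U = (\<lambda>t xs. X (map (\<lambda>p. if p \<in> J then t p else xs!(p-1)) [1..<K+1]))"
  define V :: "(nat \<Rightarrow> nat) \<Rightarrow> nat list \<Rightarrow> 'a" where "V = (\<lambda>t xs. if (\<forall>p\<in>J. xs!(p-1) = t p) then (1::'a) else 0)"
  show ?thesis
  proof (rule decI[of T _ _ _ _ U _ V])
    show "finite T" unfolding T_def using fJ by (simp add: finite_PiE)
    show "card T \<le> n ^ card J" unfolding T_def using fJ by (simp add: card_PiE)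
    fix t assume "t \<in> T"
    show "Idep n K I (U t)" unfolding Idep_def U_def
    proof (intro ballI impI)
      fix xs ys assume xs: "xs \<in> tdom n K" and ys: "ys \<in> tdom n K" and ag: "\<forall>p\<in>I. xs ! (p - 1) = ys ! (p - 1)"
      have "map (\<lambda>p. if p \<in> J then t p else xs ! (p - 1)) [1..<K + 1] = map (\<lambda>p. if p \<in> J then t p else ys ! (p - 1)) [1..<K + 1]"
      proof (rule map_cong[OF refl])
        fix p assume "p \<in> set [1..<K+1]"
        then have "p \<in> {1..K}" by auto
        then show "(if p \<in> J then t p else xs ! (p - 1)) = (if p \<in> J then t p else ys ! (p - 1))"
          using assms(1) ag by auto
      qed
      then show "X (map (\<lambda>p. if p \<in> J then t p else xs ! (p - 1)) [1..<K + 1]) = X (map (\<lambda>p. if p \<in> J then t p else ys ! (p - 1)) [1..<K + 1])"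
        by (rule arg_cong)
    qed
    show "Idep n K J (V t)" unfolding Idep_def
    proof (intro ballI impI)
      fix xs ys :: "nat list" assume ag: "\<forall>p\<in>J. xs ! (p - 1) = ys ! (p - 1)"
      have "(\<forall>p\<in>J. xs!(p-1) = t p) = (\<forall>p\<in>J. ys!(p-1) = t p)" using ag by simp
      then show "V t xs = V t ys" unfolding V_def by (simp only:)
    qed
  next
    fix xs assume xs: "xs \<in> tdom n K"
    define t0 where "t0 = restrict (\<lambda>p. xs!(p-1)) J"
    have lx: "length xs = K" and sx: "set xs \<subseteq> {1..n}" using xs unfolding tdom_def by auto
    have t0T: "t0 \<in> T" unfolding T_def t0_def
    proof (rule restrict_PiE_iff[THEN iffD2], intro ballI)
      fix p assume "p \<in> J"
      then have "p \<in> {1..K}" using assms(2) by blast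
      then have "p - 1 < length xs" using lx by auto
      then show "xs ! (p - 1) \<in> {1..n}" using sx nth_mem by blast
    qed
    have Ut0: "U t0 xs = X xs"
    proof -
      have "map (\<lambda>p. if p \<in> J then t0 p else xs ! (p - 1)) [1..<K + 1] = map (\<lambda>p. xs ! (p - 1)) [1..<K + 1]"
        by (rule map_cong) (auto simp: t0_def)
      also have "\<dots> = xs" using map_nth_upt[of xs] lx by simp
      finally show ?thesis unfolding U_def by (rule arg_cong)
    qed
    have Vt0: "V t0 xs = 1"
    proof -
      have "\<forall>p\<in>J. xs!(p-1) = t0 p" unfolding t0_def by simp
      then show ?thesis unfolding V_def by simp
    qed
    have V0: "V t xs = 0" if tT: "t \<in> T" and tn: "t \<noteq> t0" for t
    proof -
      have "\<not> (\<forall>p\<in>J. xs ! (p - 1) = t p)"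
      proof
        assume H: "\<forall>p\<in>J. xs ! (p - 1) = t p"
        have tP: "t \<in> PiE J (\<lambda>_. {1..n})" using tT unfolding T_def .
        have "t p = t0 p" for p
        proof (cases "p \<in> J")
          case True
          then have "t0 p = xs ! (p - 1)" unfolding t0_def by simp
          then show ?thesis using H True by simp
        next
          case False
          then have "t0 p = undefined" unfolding t0_def by simp
          moreover have "t p = undefined" using tP False by (rule PiE_arb)
          ultimately show ?thesis by simp
        qed
        then have "t = t0" by (rule ext)
        then show False using tn by simp
      qed
      then show ?thesis unfolding V_def by (simp only: if_False)
    qed
    have "(\<Sum>t\<in>T. U t xs * V t xs) = (\<Sum>t\<in>T. if t = t0 then X xs else 0)"
    proof (rule sum.cong[OF refl])
      fix t assume "t \<in> T"
      show "U t xs * V t xs = (if t = t0 then X xs else 0)"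
      proof (cases "t = t0")
        case True
        then show ?thesis using Ut0 Vt0 by simp
      next
        case False
        then show ?thesis using V0[OF \<open>t \<in> T\<close> False] by simp
      qed
    qed
    also have "\<dots> = X xs" using t0T fJ unfolding T_def by (simp add: finite_PiE)
    finally show "X xs = (\<Sum>t\<in>T. U t xs * V t xs)" by simp
  qed
qed

lemma flat_index_nth:
  assumes "p \<in> {1..K}"
  shows "flat_index n K I J r c ! (p - 1) = (if p \<in> I then digit n r (card {q \<in> I. q < p}) else digit n c (card {q \<in> J. q < p}))"
  using assms unfolding flat_index_def upt_shift by (auto simp: nth_map)

lemma flat_index_tdom:
  assumes "n \<ge> 1"
  shows "flat_index n K I J r c \<in> tdom n K"
proof -
  have "digit n x j \<in> {1..n}" for x j unfolding digit_def using assms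
    by (simp add: Suc_leI)
  then show ?thesis unfolding tdom_def flat_index_def by auto
qed

lemma dec_mrank:
  assumes "n \<ge> 1" "dec n K I J X r" "I \<subseteq> {1..K}" "J \<subseteq> {1..K}" "I \<inter> J = {}"
  shows "mrank (Mat_flat n K I J X) \<le> r"
proof -
  obtain T U V where T: "finite (T::nat set)" "card T \<le> r" "\<forall>t\<in>T. Idep n K I (U t) \<and> Idep n K J (V t)"
    "\<forall>xs\<in>tdom n K. X xs = (\<Sum>t\<in>T. U t xs * V t xs)" using assms(2) unfolding dec_def by blast
  let ?fi = "flat_index n K I J"
  have "Mat_flat n K I J X = mat (n ^ card I) (n ^ card J) (\<lambda>(r,c). \<Sum>t\<in>T. U t (?fi r 0) * V t (?fi 0 c))"
    unfolding Mat_flat_def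
  proof (rule eq_matI)
    fix i j assume "i < dim_row (mat (n ^ card I) (n ^ card J) (\<lambda>(r,c). \<Sum>t\<in>T. U t (?fi r 0) * V t (?fi 0 c)))"
      "j < dim_col (mat (n ^ card I) (n ^ card J) (\<lambda>(r,c). \<Sum>t\<in>T. U t (?fi r 0) * V t (?fi 0 c)))"
    then have ij: "i < n ^ card I" "j < n ^ card J" by auto
    have "X (?fi i j) = (\<Sum>t\<in>T. U t (?fi i j) * V t (?fi i j))" using T(4) flat_index_tdom[OF assms(1)] by blast
    also have "\<dots> = (\<Sum>t\<in>T. U t (?fi i 0) * V t (?fi 0 j))"
    proof (rule sum.cong[OF refl])
      fix t assume "t \<in> T"
      have "U t (?fi i j) = U t (?fi i 0)"
      proof -
        have "\<forall>p\<in>I. ?fi i j ! (p-1) = ?fi i 0 ! (p-1)"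
        proof
          fix p assume "p \<in> I"
          then have "p \<in> {1..K}" using assms(3) by auto
          then show "?fi i j ! (p-1) = ?fi i 0 ! (p-1)"
            using flat_index_nth[OF \<open>p \<in> {1..K}\<close>, of n I J i j] flat_index_nth[OF \<open>p \<in> {1..K}\<close>, of n I J i 0] \<open>p \<in> I\<close> by simp
        qed
        moreover have "Idep n K I (U t)" using T(3) \<open>t \<in> T\<close> by blast
        ultimately show ?thesis using IdepD[OF _ flat_index_tdom[OF assms(1)] flat_index_tdom[OF assms(1)]] by blast
      qed
      moreover have "V t (?fi i j) = V t (?fi 0 j)"
      proof -
        have "\<forall>p\<in>J. ?fi i j ! (p-1) = ?fi 0 j ! (p-1)"
        proof
          fix p assume "p \<in> J"
          then have "p \<in> {1..K}" "p \<notin> I" using assms(4,5) by auto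
          then show "?fi i j ! (p-1) = ?fi 0 j ! (p-1)"
            using flat_index_nth[OF \<open>p \<in> {1..K}\<close>, of n I J i j] flat_index_nth[OF \<open>p \<in> {1..K}\<close>, of n I J 0 j] by simp
        qed
        moreover have "Idep n K J (V t)" using T(3) \<open>t \<in> T\<close> by blast
        ultimately show ?thesis using IdepD[OF _ flat_index_tdom[OF assms(1)] flat_index_tdom[OF assms(1)]] by blast
      qed
      ultimately show "U t (?fi i j) * V t (?fi i j) = U t (?fi i 0) * V t (?fi 0 j)" by simp
    qed
    finally show "mat (n ^ card I) (n ^ card J) (\<lambda>(r, c). X (?fi r c)) $$ (i, j) =
         mat (n ^ card I) (n ^ card J) (\<lambda>(r,c). \<Sum>t\<in>T. U t (?fi r 0) * V t (?fi 0 c)) $$ (i, j)"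
      using ij by simp
  qed auto
  then have "mrank (Mat_flat n K I J X) \<le> card T"
    using mrank_sum_outer[OF T(1), of "n ^ card I" "n ^ card J" "\<lambda>t r. U t (?fi r 0)" "\<lambda>t c. V t (?fi 0 c)"]
    by simp
  then show ?thesis using T(2) by simp
qed



definition inI :: "nat \<Rightarrow> nat \<Rightarrow> nat list \<Rightarrow> nat \<Rightarrow> nat \<Rightarrow> bool" where
  "inI k a \<alpha> b p = (if p = 1 then a = 1 else if p = 2*k then b = 0
      else if even p then \<alpha>!(p div 2 - 1) = 0 else \<alpha>!(p div 2 - 1) = 1)"

lemma alphas_bit: "\<alpha> \<in> alphas k \<Longrightarrow> 1 \<le> i \<Longrightarrow> i \<le> k - 1 \<Longrightarrow> \<alpha>!(i-1) \<le> 1"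
proof -
  assume a: "\<alpha> \<in> alphas k" "1 \<le> i" "i \<le> k - 1"
  then have "i - 1 < length \<alpha>" unfolding alphas_def by auto
  then have "\<alpha>!(i-1) \<in> set \<alpha>" by simp
  then show ?thesis using a(1) unfolding alphas_def by auto
qed

lemma Ipart_mem: "p \<in> Ipart k a \<alpha> b \<longleftrightarrow> p \<in> {1..2*k} \<and> (p = a \<or> (\<exists>i. p = 2*i + \<alpha>!(i-1) \<and> 1 \<le> i \<and> i \<le> k - 1) \<or> p = 2*k + b)"
  unfolding Ipart_def by blast

lemma Jpart_mem: "p \<in> Jpart k a \<alpha> b \<longleftrightarrow> p \<in> {1..2*k} \<and> (p = 1 - a \<or> (\<exists>i. p = 2*i + 1 - \<alpha>!(i-1) \<and> 1 \<le> i \<and> i \<le> k - 1) \<or> p = 2*k + 1 - b)"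
  unfolding Jpart_def by blast

lemma Ipart_iff:
  assumes "\<alpha> \<in> alphas k" "a \<le> 1" "b \<le> 1"
  shows "p \<in> Ipart k a \<alpha> b \<longleftrightarrow> p \<in> {1..2*k} \<and> inI k a \<alpha> b p"
proof
  assume "p \<in> Ipart k a \<alpha> b"
  then have p: "p \<in> {1..2*k}" and d: "p = a \<or> (\<exists>i. p = 2*i + \<alpha>!(i-1) \<and> 1 \<le> i \<and> i \<le> k - 1) \<or> p = 2*k + b"
    unfolding Ipart_mem by auto
  from d have "inI k a \<alpha> b p"
  proof (elim disjE exE conjE)
    assume "p = a" then show ?thesis using p assms(2) unfolding inI_def by auto
  next
    fix i assume i: "p = 2*i + \<alpha>!(i-1)" "1 \<le> i" "i \<le> k - 1"
    have b1: "\<alpha>!(i-1) \<le> 1" using alphas_bit[OF assms(1) i(2,3)] .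
    show ?thesis
    proof (cases "\<alpha>!(i-1) = 0")
      case True
      then have "p = 2*i" using i by simp
      then show ?thesis using True i unfolding inI_def by auto
    next
      case False
      then have "\<alpha>!(i-1) = 1" using b1 by simp
      then have "p = 2*i+1" using i by simp
      then show ?thesis using \<open>\<alpha>!(i-1) = 1\<close> i unfolding inI_def by auto
    qed
  next
    assume "p = 2*k + b" then show ?thesis using p unfolding inI_def by auto
  qed
  then show "p \<in> {1..2*k} \<and> inI k a \<alpha> b p" using p by simp
next
  assume H: "p \<in> {1..2*k} \<and> inI k a \<alpha> b p"
  then have p: "1 \<le> p" "p \<le> 2*k" and h: "inI k a \<alpha> b p" by auto
  have "p = a \<or> (\<exists>i. p = 2*i + \<alpha>!(i-1) \<and> 1 \<le> i \<and> i \<le> k - 1) \<or> p = 2*k + b"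
  proof (cases "p = 1")
    case True then show ?thesis using h unfolding inI_def by auto
  next
    case F1: False
    show ?thesis
    proof (cases "p = 2*k")
      case True then show ?thesis using h F1 unfolding inI_def by auto
    next
      case F2: False
      define i where "i = p div 2"
      have i: "1 \<le> i" "i \<le> k - 1" using p F1 F2 unfolding i_def by auto
      have "p = 2*i + \<alpha>!(i-1)"
      proof (cases "even p")
        case True
        then have "\<alpha>!(i-1) = 0" using h F1 F2 unfolding inI_def i_def by auto
        then show ?thesis using True unfolding i_def by auto
      next
        case False
        then have "\<alpha>!(i-1) = 1" using h F1 F2 unfolding inI_def i_def by auto
        then show ?thesis using False unfolding i_def by presburger
      qed
      then show ?thesis using i by blast
    qed
  qed
  then show "p \<in> Ipart k a \<alpha> b" unfolding Ipart_mem using H by blast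
qed

lemma Jpart_iff:
  assumes "\<alpha> \<in> alphas k" "a \<le> 1" "b \<le> 1"
  shows "p \<in> Jpart k a \<alpha> b \<longleftrightarrow> p \<in> {1..2*k} \<and> \<not> inI k a \<alpha> b p"
proof
  assume "p \<in> Jpart k a \<alpha> b"
  then have p: "p \<in> {1..2*k}" and d: "p = 1 - a \<or> (\<exists>i. p = 2*i + 1 - \<alpha>!(i-1) \<and> 1 \<le> i \<and> i \<le> k - 1) \<or> p = 2*k + 1 - b"
    unfolding Jpart_mem by auto
  from d have "\<not> inI k a \<alpha> b p"
  proof (elim disjE exE conjE)
    assume "p = 1 - a" then show ?thesis using p assms(2) unfolding inI_def by auto
  next
    fix i assume i: "p = 2*i + 1 - \<alpha>!(i-1)" "1 \<le> i" "i \<le> k - 1"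
    have b1: "\<alpha>!(i-1) \<le> 1" using alphas_bit[OF assms(1) i(2,3)] .
    show ?thesis
    proof (cases "\<alpha>!(i-1) = 0")
      case True
      then have "p = 2*i+1" using i by simp
      then show ?thesis using True i unfolding inI_def by auto
    next
      case False
      then have "\<alpha>!(i-1) = 1" using b1 by simp
      then have "p = 2*i" using i by simp
      then show ?thesis using \<open>\<alpha>!(i-1) = 1\<close> i unfolding inI_def by auto
    qed
  next
    assume "p = 2*k + 1 - b" then show ?thesis using p assms(3) unfolding inI_def by auto
  qed
  then show "p \<in> {1..2*k} \<and> \<not> inI k a \<alpha> b p" using p by simp
next
  assume H: "p \<in> {1..2*k} \<and> \<not> inI k a \<alpha> b p"
  then have p: "1 \<le> p" "p \<le> 2*k" and h: "\<not> inI k a \<alpha> b p" by auto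
  have "p = 1 - a \<or> (\<exists>i. p = 2*i + 1 - \<alpha>!(i-1) \<and> 1 \<le> i \<and> i \<le> k - 1) \<or> p = 2*k + 1 - b"
  proof (cases "p = 1")
    case True then show ?thesis using h assms(2) unfolding inI_def by auto
  next
    case F1: False
    show ?thesis
    proof (cases "p = 2*k")
      case True then show ?thesis using h F1 assms(3) unfolding inI_def by auto
    next
      case F2: False
      define i where "i = p div 2"
      have i: "1 \<le> i" "i \<le> k - 1" using p F1 F2 unfolding i_def by auto
      have b1: "\<alpha>!(i-1) \<le> 1" using alphas_bit[OF assms(1) i] .
      have "p = 2*i + 1 - \<alpha>!(i-1)"
      proof (cases "even p")
        case True
        then have "\<alpha>!(i-1) \<noteq> 0" using h F1 F2 unfolding inI_def i_def by auto
        then have "\<alpha>!(i-1) = 1" using b1 by simp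
        then show ?thesis using True unfolding i_def by auto
      next
        case False
        then have "\<alpha>!(i-1) \<noteq> 1" using h F1 F2 unfolding inI_def i_def by auto
        then have "\<alpha>!(i-1) = 0" using b1 by simp
        then show ?thesis using False unfolding i_def by presburger
      qed
      then show ?thesis using i by blast
    qed
  qed
  then show "p \<in> Jpart k a \<alpha> b" unfolding Jpart_mem using H by blast
qed

lemma Ipart_sub: "Ipart k a \<alpha> b \<subseteq> {1..2*k}" unfolding Ipart_def by blast
lemma Jpart_sub: "Jpart k a \<alpha> b \<subseteq> {1..2*k}" unfolding Jpart_def by blast

lemma IJ_disj:
  assumes "\<alpha> \<in> alphas k" "a \<le> 1" "b \<le> 1"
  shows "Ipart k a \<alpha> b \<inter> Jpart k a \<alpha> b = {}"
  using Ipart_iff[OF assms] Jpart_iff[OF assms] by blast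

lemma IJ_cover:
  assumes "\<alpha> \<in> alphas k" "a \<le> 1" "b \<le> 1"
  shows "{1..2*k} \<subseteq> Ipart k a \<alpha> b \<union> Jpart k a \<alpha> b"
  using Ipart_iff[OF assms] Jpart_iff[OF assms] by blast

lemma card_J10: "card (Jpart k 1 \<alpha> 0) \<le> k - 1"
proof -
  have "Jpart k 1 \<alpha> 0 \<subseteq> (\<lambda>i. 2*i + 1 - \<alpha>!(i-1)) ` {1..k-1}"
  proof
    fix p assume "p \<in> Jpart k 1 \<alpha> 0"
    then have "p \<in> {1..2*k}" "p = 0 \<or> (\<exists>i. p = 2*i + 1 - \<alpha>!(i-1) \<and> 1 \<le> i \<and> i \<le> k - 1) \<or> p = 2*k + 1"
      unfolding Jpart_mem by auto
    then show "p \<in> (\<lambda>i. 2*i + 1 - \<alpha>!(i-1)) ` {1..k-1}" by auto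
  qed
  then have "card (Jpart k 1 \<alpha> 0) \<le> card ((\<lambda>i. 2*i + 1 - \<alpha>!(i-1)) ` {1..k-1})"
    by (rule card_mono[rotated]) simp
  also have "\<dots> \<le> card {1..k-1}" by (rule card_image_le) simp
  finally show ?thesis by simp
qed

lemma card_I01: "card (Ipart k 0 \<alpha> 1) \<le> k - 1"
proof -
  have "Ipart k 0 \<alpha> 1 \<subseteq> (\<lambda>i. 2*i + \<alpha>!(i-1)) ` {1..k-1}"
  proof
    fix p assume "p \<in> Ipart k 0 \<alpha> 1"
    then have "p \<in> {1..2*k}" "p = 0 \<or> (\<exists>i. p = 2*i + \<alpha>!(i-1) \<and> 1 \<le> i \<and> i \<le> k - 1) \<or> p = 2*k + 1"
      unfolding Ipart_mem by auto
    then show "p \<in> (\<lambda>i. 2*i + \<alpha>!(i-1)) ` {1..k-1}" by auto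
  qed
  then have "card (Ipart k 0 \<alpha> 1) \<le> card ((\<lambda>i. 2*i + \<alpha>!(i-1)) ` {1..k-1})"
    by (rule card_mono[rotated]) simp
  also have "\<dots> \<le> card {1..k-1}" by (rule card_image_le) simp
  finally show ?thesis by simp
qed

lemma inI_left:
  assumes "e \<ge> 1" "f \<ge> 1" "length \<beta> = e - 1" "p \<in> {1..2*e}"
  shows "inI (e+f) a (\<beta> @ c # \<gamma>) b p = inI e a \<beta> c p"
proof -
  consider "p = 1" | "p = 2*e" "p \<noteq> 1" | "2 \<le> p" "p < 2*e" using assms(4) by force
  then show ?thesis
  proof cases
    case 1 then show ?thesis using assms unfolding inI_def by auto
  next
    case 2
    then have "p \<noteq> 2*(e+f)" using assms by auto
    moreover have "(\<beta> @ c # \<gamma>) ! (p div 2 - 1) = c" using 2 assms(3) by (simp add: nth_append)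
    ultimately show ?thesis using 2 unfolding inI_def by auto
  next
    case 3
    then have "p \<noteq> 2*(e+f)" "p \<noteq> 2*e" "p \<noteq> 1" by auto
    moreover have "p div 2 - 1 < length \<beta>" using 3 assms(3) by presburger
    then have "(\<beta> @ c # \<gamma>) ! (p div 2 - 1) = \<beta> ! (p div 2 - 1)"
      by (simp add: nth_append)
    ultimately show ?thesis unfolding inI_def by simp
  qed
qed

lemma inI_right:
  assumes "e \<ge> 1" "f \<ge> 1" "length \<beta> = e - 1" "p \<in> {1..2*f}"
  shows "inI (e+f) a (\<beta> @ c # \<gamma>) b (2*e + p) = inI f c \<gamma> b p"
proof -
  consider "p = 1" | "p = 2*f" "p \<noteq> 1" | "2 \<le> p" "p < 2*f" using assms(4) by force
  then show ?thesis
  proof cases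
    case 1
    then have "2*e+p \<noteq> 2*(e+f)" "2*e+p \<noteq> 1" "odd (2*e+p)" "(2*e+p) div 2 - 1 = length \<beta>"
      using assms by auto
    then show ?thesis using 1 unfolding inI_def by (simp add: nth_append)
  next
    case 2
    then have "2*e+p \<noteq> 1" "2*e+p = 2*(e+f)" using assms by auto
    then show ?thesis using 2 unfolding inI_def by simp
  next
    case 3
    then have "2*e+p \<noteq> 2*(e+f)" "2*e+p \<noteq> 1" "p \<noteq> 1" "p \<noteq> 2*f" by auto
    moreover have "(2*e+p) div 2 - 1 = length \<beta> + 1 + (p div 2 - 1)" using 3 assms by auto
    moreover have "even (2*e+p) = even p" by simp
    ultimately show ?thesis unfolding inI_def by (simp add: nth_append)
  qed
qed



definition good :: "nat \<Rightarrow> nat \<Rightarrow> nat \<Rightarrow> nat \<Rightarrow> (nat list \<Rightarrow> 'a::field) \<Rightarrow> real \<Rightarrow> bool" where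
  "good n k a b A s = (\<exists>X r. (\<forall>xs\<in>tdom n (2*k). A xs = (\<Sum>\<alpha>\<in>alphas k. X \<alpha> xs)) \<and>
      (\<forall>\<alpha>\<in>alphas k. dec n (2*k) (Ipart k a \<alpha> b) (Jpart k a \<alpha> b) (X \<alpha>) (r \<alpha>)) \<and>
      real (\<Sum>\<alpha>\<in>alphas k. r \<alpha>) \<le> s)"

lemma goodI:
  assumes "\<And>xs. xs\<in>tdom n (2*k) \<Longrightarrow> A xs = (\<Sum>\<alpha>\<in>alphas k. X \<alpha> xs)"
    "\<And>\<alpha>. \<alpha>\<in>alphas k \<Longrightarrow> dec n (2*k) (Ipart k a \<alpha> b) (Jpart k a \<alpha> b) (X \<alpha>) (r \<alpha>)"
    "real (\<Sum>\<alpha>\<in>alphas k. r \<alpha>) \<le> s"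
  shows "good n k a b A s"
  unfolding good_def using assms by blast

lemma goodE:
  assumes "good n k a b A s"
  obtains X r where "\<And>xs. xs\<in>tdom n (2*k) \<Longrightarrow> A xs = (\<Sum>\<alpha>\<in>alphas k. X \<alpha> xs)"
    "\<And>\<alpha>. \<alpha>\<in>alphas k \<Longrightarrow> dec n (2*k) (Ipart k a \<alpha> b) (Jpart k a \<alpha> b) (X \<alpha>) (r \<alpha>)"
    "real (\<Sum>\<alpha>\<in>alphas k. r \<alpha>) \<le> s"
  using assms unfolding good_def by blast

lemma finite_alphas: "finite (alphas k)"
proof -
  have "alphas k = {xs. set xs \<subseteq> {0,1} \<and> length xs = k - 1}" unfolding alphas_def by auto
  then show ?thesis using finite_lists_length_eq[of "{0::nat,1}" "k-1"] by simp
qed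

lemma good_mono: "good n k a b A s \<Longrightarrow> s \<le> s' \<Longrightarrow> good n k a b A s'"
  by (erule goodE, rule goodI) auto

lemma good_cong: "good n k a b A s \<Longrightarrow> (\<And>xs. xs \<in> tdom n (2*k) \<Longrightarrow> A xs = A' xs) \<Longrightarrow> good n k a b A' s"
  by (erule goodE, rule goodI) auto

lemma good_zero: "good n k a b (\<lambda>_. 0) 0"
  by (rule goodI[where X="\<lambda>_ _. 0" and r="\<lambda>_. 0"]) (auto simp: dec_zero)

lemma good_add:
  assumes "good n k a b A s1" "good n k a b B s2"
  shows "good n k a b (\<lambda>xs. A xs + B xs) (s1 + s2)"
proof -
  obtain X1 r1 where 1: "\<And>xs. xs\<in>tdom n (2*k) \<Longrightarrow> A xs = (\<Sum>\<alpha>\<in>alphas k. X1 \<alpha> xs)"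
    "\<And>\<alpha>. \<alpha>\<in>alphas k \<Longrightarrow> dec n (2*k) (Ipart k a \<alpha> b) (Jpart k a \<alpha> b) (X1 \<alpha>) (r1 \<alpha>)"
    "real (\<Sum>\<alpha>\<in>alphas k. r1 \<alpha>) \<le> s1" using goodE[OF assms(1)] by blast
  obtain X2 r2 where 2: "\<And>xs. xs\<in>tdom n (2*k) \<Longrightarrow> B xs = (\<Sum>\<alpha>\<in>alphas k. X2 \<alpha> xs)"
    "\<And>\<alpha>. \<alpha>\<in>alphas k \<Longrightarrow> dec n (2*k) (Ipart k a \<alpha> b) (Jpart k a \<alpha> b) (X2 \<alpha>) (r2 \<alpha>)"
    "real (\<Sum>\<alpha>\<in>alphas k. r2 \<alpha>) \<le> s2" using goodE[OF assms(2)] by blast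
  show ?thesis
  proof (rule goodI[where X="\<lambda>\<alpha> xs. X1 \<alpha> xs + X2 \<alpha> xs" and r="\<lambda>\<alpha>. r1 \<alpha> + r2 \<alpha>"])
    fix xs assume "xs \<in> tdom n (2*k)"
    then show "A xs + B xs = (\<Sum>\<alpha>\<in>alphas k. X1 \<alpha> xs + X2 \<alpha> xs)" using 1 2 by (simp add: sum.distrib)
  next
    fix \<alpha> assume "\<alpha> \<in> alphas k"
    then show "dec n (2*k) (Ipart k a \<alpha> b) (Jpart k a \<alpha> b) (\<lambda>xs. X1 \<alpha> xs + X2 \<alpha> xs) (r1 \<alpha> + r2 \<alpha>)"
      using 1 2 by (simp add: dec_add)
  next
    show "real (\<Sum>\<alpha>\<in>alphas k. r1 \<alpha> + r2 \<alpha>) \<le> s1 + s2" using 1(3) 2(3) by (simp add: sum.distrib)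
  qed
qed

lemma good_sum:
  assumes "finite F" "\<And>i. i \<in> F \<Longrightarrow> good n k a b (T i) (s i)"
  shows "good n k a b (\<lambda>xs. \<Sum>i\<in>F. T i xs) (\<Sum>i\<in>F. s i)"
  using assms
proof (induction F rule: finite_induct)
  case empty
  then show ?case using good_zero by simp
next
  case (insert x F)
  have "good n k a b (\<lambda>xs. T x xs + (\<Sum>i\<in>F. T i xs)) (s x + (\<Sum>i\<in>F. s i))"
    by (rule good_add) (use insert in auto)
  then show ?case using insert by simp
qed

lemma replicate_alphas: "replicate (k-1) 0 \<in> alphas k"
  unfolding alphas_def by auto

lemma good_trivial:
  fixes Y :: "nat list \<Rightarrow> 'a::field"
  assumes "n \<ge> 1" "(a = 1 \<and> b = 0) \<or> (a = 0 \<and> b = 1)"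
  shows "good n k a b Y (real n ^ (k-1))"
proof -
  define \<alpha>0 where "\<alpha>0 = replicate (k-1) (0::nat)"
  have a0: "\<alpha>0 \<in> alphas k" unfolding \<alpha>0_def by (rule replicate_alphas)
  have ab: "a \<le> 1" "b \<le> 1" using assms(2) by auto
  show ?thesis
  proof (rule goodI[where X="\<lambda>\<alpha> xs. if \<alpha> = \<alpha>0 then Y xs else 0" and r="\<lambda>\<alpha>. if \<alpha> = \<alpha>0 then n^(k-1) else 0"])
    fix xs show "Y xs = (\<Sum>\<alpha>\<in>alphas k. if \<alpha> = \<alpha>0 then Y xs else 0)" using a0 finite_alphas by simp
  next
    fix \<alpha> assume al: "\<alpha> \<in> alphas k"
    show "dec n (2*k) (Ipart k a \<alpha> b) (Jpart k a \<alpha> b) (\<lambda>xs. if \<alpha> = \<alpha>0 then Y xs else 0) (if \<alpha> = \<alpha>0 then n^(k-1) else 0)"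
    proof (cases "\<alpha> = \<alpha>0")
      case False then show ?thesis using dec_zero by simp
    next
      case True
      have cov: "{1..2*k} \<subseteq> Ipart k a \<alpha> b \<union> Jpart k a \<alpha> b" using IJ_cover[OF al ab] .
      have "dec n (2*k) (Ipart k a \<alpha> b) (Jpart k a \<alpha> b) Y (n^(k-1))"
      proof (cases "a = 1")
        case True
        then have b0: "b = 0" using assms(2) by auto
        have "dec n (2*k) (Ipart k a \<alpha> b) (Jpart k a \<alpha> b) Y (n ^ card (Jpart k a \<alpha> b))"
          by (rule dec_generic[OF cov Jpart_sub])
        moreover have "n ^ card (Jpart k a \<alpha> b) \<le> n^(k-1)"
          using card_J10[of k \<alpha>] True b0 assms(1) by (simp add: power_increasing)
        ultimately show ?thesis by (rule dec_mono)
      next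
        case False
        then have a0: "a = 0" "b = 1" using assms(2) by auto
        have "dec n (2*k) (Jpart k a \<alpha> b) (Ipart k a \<alpha> b) Y (n ^ card (Ipart k a \<alpha> b))"
          by (rule dec_generic) (use cov Ipart_sub in auto)
        then have "dec n (2*k) (Ipart k a \<alpha> b) (Jpart k a \<alpha> b) Y (n ^ card (Ipart k a \<alpha> b))"
          by (rule dec_swap)
        moreover have "n ^ card (Ipart k a \<alpha> b) \<le> n^(k-1)"
          using card_I01[of k \<alpha>] a0 assms(1) by (simp add: power_increasing)
        ultimately show ?thesis by (rule dec_mono)
      qed
      then show ?thesis using True by simp
    qed
  next
    show "real (\<Sum>\<alpha>\<in>alphas k. if \<alpha> = \<alpha>0 then n^(k-1) else 0) \<le> real n ^ (k-1)"
      using a0 finite_alphas by simp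
  qed
qed

lemma alphas_one: "alphas 1 = {[]}"
  unfolding alphas_def by auto
lemma alphas_one': "alphas (Suc 0) = {[]}"
  unfolding alphas_def by auto

lemma good_base:
  fixes A :: "nat list \<Rightarrow> 'a::field"
  assumes "n \<ge> 1" "a \<le> 1" "b \<le> 1"
  shows "good n 1 a b A (real n)"
proof (rule goodI[where X="\<lambda>_. A" and r="\<lambda>_. n"])
  fix xs show "A xs = (\<Sum>\<alpha>\<in>alphas 1. A xs)" by (simp add: alphas_one alphas_one')
next
  show "real (\<Sum>\<alpha>\<in>alphas 1. n) \<le> real n" by (simp add: alphas_one alphas_one')
next
  fix \<alpha> assume al: "\<alpha> \<in> alphas 1"
  have ab: "a \<le> 1" "b \<le> 1" using assms by auto
  have cov: "{1..2*1} \<subseteq> Ipart 1 a \<alpha> b \<union> Jpart 1 a \<alpha> b" using IJ_cover[OF al ab] .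
  show "dec n (2*1) (Ipart 1 a \<alpha> b) (Jpart 1 a \<alpha> b) A n"
  proof (cases "a = 1")
    case True
    have "Jpart 1 a \<alpha> b \<subseteq> {2}"
    proof
      fix p assume "p \<in> Jpart 1 a \<alpha> b"
      then have "p \<in> {1..2}" "\<not> inI 1 a \<alpha> b p" using Jpart_iff[OF al ab] by auto
      then show "p \<in> {2}" using True unfolding inI_def by (cases "p = 1") auto
    qed
    then have "card (Jpart 1 a \<alpha> b) \<le> 1" using card_mono[of "{2::nat}"] by fastforce
    then have "n ^ card (Jpart 1 a \<alpha> b) \<le> n" using assms(1)
      by (metis power_increasing power_one_right)
    moreover have "dec n (2*1) (Ipart 1 a \<alpha> b) (Jpart 1 a \<alpha> b) A (n ^ card (Jpart 1 a \<alpha> b))"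
      by (rule dec_generic[OF cov Jpart_sub])
    ultimately show ?thesis using dec_mono by blast
  next
    case False
    have "Ipart 1 a \<alpha> b \<subseteq> {2}"
    proof
      fix p assume "p \<in> Ipart 1 a \<alpha> b"
      then have "p \<in> {1..2}" "inI 1 a \<alpha> b p" using Ipart_iff[OF al ab] by auto
      then show "p \<in> {2}" using False assms(2) unfolding inI_def by (cases "p = 1") auto
    qed
    then have "card (Ipart 1 a \<alpha> b) \<le> 1" using card_mono[of "{2::nat}"] by fastforce
    then have "n ^ card (Ipart 1 a \<alpha> b) \<le> n" using assms(1)
      by (metis power_increasing power_one_right)
    moreover have "dec n (2*1) (Jpart 1 a \<alpha> b) (Ipart 1 a \<alpha> b) A (n ^ card (Ipart 1 a \<alpha> b))"
      by (rule dec_generic[OF _ Ipart_sub]) (use cov in blast)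
    then have "dec n (2*1) (Ipart 1 a \<alpha> b) (Jpart 1 a \<alpha> b) A (n ^ card (Ipart 1 a \<alpha> b))"
      by (rule dec_swap)
    ultimately show ?thesis using dec_mono by blast
  qed
qed



lemma tdom_take: "xs \<in> tdom n K \<Longrightarrow> m \<le> K \<Longrightarrow> take m xs \<in> tdom n m"
  unfolding tdom_def by (auto dest: in_set_takeD)

lemma tdom_drop: "xs \<in> tdom n (m + K) \<Longrightarrow> drop m xs \<in> tdom n K"
  unfolding tdom_def by (auto dest: in_set_dropD)

lemma Idep_prod:
  assumes "Idep n (2*e) I1 U1" "Idep n (2*f) I2 U2" "I1 \<subseteq> {1..2*e}" "I2 \<subseteq> {1..2*f}"
    "\<forall>p\<in>I1. p \<in> I" "\<forall>p\<in>I2. 2*e+p \<in> I"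
  shows "Idep n (2*e+2*f) I (\<lambda>xs. U1 (take (2*e) xs) * U2 (drop (2*e) xs))"
  unfolding Idep_def
proof (intro ballI impI)
  fix xs ys assume xs: "xs \<in> tdom n (2*e+2*f)" and ys: "ys \<in> tdom n (2*e+2*f)"
    and ag: "\<forall>p\<in>I. xs ! (p - 1) = ys ! (p - 1)"
  have lx: "length xs = 2*e+2*f" "length ys = 2*e+2*f" using xs ys unfolding tdom_def by auto
  have "U1 (take (2*e) xs) = U1 (take (2*e) ys)"
  proof (rule IdepD[OF assms(1) tdom_take[OF xs] tdom_take[OF ys]])
    show "\<forall>p\<in>I1. take (2 * e) xs ! (p - 1) = take (2 * e) ys ! (p - 1)"
    proof
      fix p assume p: "p \<in> I1"
      then have "p \<in> {1..2*e}" "p \<in> I" using assms(3,5) by auto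
      then show "take (2 * e) xs ! (p - 1) = take (2 * e) ys ! (p - 1)" using ag by auto
    qed
  qed auto
  moreover have "U2 (drop (2*e) xs) = U2 (drop (2*e) ys)"
  proof (rule IdepD[OF assms(2) tdom_drop[OF xs] tdom_drop[OF ys]])
    show "\<forall>p\<in>I2. drop (2 * e) xs ! (p - 1) = drop (2 * e) ys ! (p - 1)"
    proof
      fix p assume p: "p \<in> I2"
      then have "p \<in> {1..2*f}" "2*e+p \<in> I" using assms(4,6) by auto
      then have "xs ! (2*e+p-1) = ys ! (2*e+p-1)" using ag by auto
      moreover have "2*e+p-1 = 2*e + (p-1)" using \<open>p \<in> {1..2*f}\<close> by auto
      ultimately show "drop (2 * e) xs ! (p - 1) = drop (2 * e) ys ! (p - 1)" using lx by simp
    qed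
  qed
  ultimately show "U1 (take (2 * e) xs) * U2 (drop (2 * e) xs) = U1 (take (2 * e) ys) * U2 (drop (2 * e) ys)"
    by simp
qed

lemma dec_prod:
  assumes "dec n (2*e) I1 J1 X r1" "dec n (2*f) I2 J2 Y r2"
    "I1 \<subseteq> {1..2*e}" "J1 \<subseteq> {1..2*e}" "I2 \<subseteq> {1..2*f}" "J2 \<subseteq> {1..2*f}"
    "\<forall>p\<in>I1. p \<in> I" "\<forall>p\<in>J1. p \<in> J" "\<forall>p\<in>I2. 2*e+p \<in> I" "\<forall>p\<in>J2. 2*e+p \<in> J"
  shows "dec n (2*e+2*f) I J (tprod (2*e) X Y) (r1 * r2)"
proof -
  obtain T1 U1 V1 where 1: "finite (T1::nat set)" "card T1 \<le> r1" "\<forall>t\<in>T1. Idep n (2*e) I1 (U1 t) \<and> Idep n (2*e) J1 (V1 t)"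
    "\<forall>xs\<in>tdom n (2*e). X xs = (\<Sum>t\<in>T1. U1 t xs * V1 t xs)" using assms(1) unfolding dec_def by blast
  obtain T2 U2 V2 where 2: "finite (T2::nat set)" "card T2 \<le> r2" "\<forall>t\<in>T2. Idep n (2*f) I2 (U2 t) \<and> Idep n (2*f) J2 (V2 t)"
    "\<forall>xs\<in>tdom n (2*f). Y xs = (\<Sum>t\<in>T2. U2 t xs * V2 t xs)" using assms(2) unfolding dec_def by blast
  show ?thesis
  proof (rule decI[of "T1 \<times> T2" _ _ _ _ "\<lambda>(s,t) xs. U1 s (take (2*e) xs) * U2 t (drop (2*e) xs)" _
        "\<lambda>(s,t) xs. V1 s (take (2*e) xs) * V2 t (drop (2*e) xs)"])
    show "finite (T1 \<times> T2)" using 1 2 by simp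
    show "card (T1 \<times> T2) \<le> r1 * r2" using 1 2 by (simp add: card_cartesian_product mult_le_mono)
  next
    fix st assume "st \<in> T1 \<times> T2"
    then obtain s t where st: "st = (s,t)" "s \<in> T1" "t \<in> T2" by blast
    have i1: "Idep n (2*e) I1 (U1 s)" "Idep n (2*e) J1 (V1 s)" using 1(3) st by auto
    have i2: "Idep n (2*f) I2 (U2 t)" "Idep n (2*f) J2 (V2 t)" using 2(3) st by auto
    show "Idep n (2*e+2*f) I ((\<lambda>(s,t) xs. U1 s (take (2*e) xs) * U2 t (drop (2*e) xs)) st)"
      unfolding st(1) using Idep_prod[OF i1(1) i2(1) assms(3,5,7,9)] by simp
    show "Idep n (2*e+2*f) J ((\<lambda>(s,t) xs. V1 s (take (2*e) xs) * V2 t (drop (2*e) xs)) st)"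
      unfolding st(1) using Idep_prod[OF i1(2) i2(2) assms(4,6,8,10)] by simp
  next
    fix xs assume xs: "xs \<in> tdom n (2*e+2*f)"
    have "tprod (2*e) X Y xs = X (take (2*e) xs) * Y (drop (2*e) xs)" unfolding tprod_def by simp
    also have "\<dots> = (\<Sum>s\<in>T1. U1 s (take (2*e) xs) * V1 s (take (2*e) xs)) * (\<Sum>t\<in>T2. U2 t (drop (2*e) xs) * V2 t (drop (2*e) xs))"
      using 1(4) 2(4) tdom_take[OF xs] tdom_drop[OF xs] by simp
    also have "\<dots> = (\<Sum>s\<in>T1. \<Sum>t\<in>T2. (U1 s (take (2*e) xs) * V1 s (take (2*e) xs)) * (U2 t (drop (2*e) xs) * V2 t (drop (2*e) xs)))"
      by (rule sum_product)
    also have "\<dots> = (\<Sum>(s,t)\<in>T1 \<times> T2. (U1 s (take (2*e) xs) * V1 s (take (2*e) xs)) * (U2 t (drop (2*e) xs) * V2 t (drop (2*e) xs)))"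
      by (rule sum.cartesian_product)
    also have "\<dots> = (\<Sum>st\<in>T1 \<times> T2. (\<lambda>(s,t) xs. U1 s (take (2*e) xs) * U2 t (drop (2*e) xs)) st xs *
              (\<lambda>(s,t) xs. V1 s (take (2*e) xs) * V2 t (drop (2*e) xs)) st xs)"
      by (rule sum.cong) (auto simp: algebra_simps)
    finally show "tprod (2*e) X Y xs = (\<Sum>st\<in>T1 \<times> T2. (\<lambda>(s,t) xs. U1 s (take (2*e) xs) * U2 t (drop (2*e) xs)) st xs *
              (\<lambda>(s,t) xs. V1 s (take (2*e) xs) * V2 t (drop (2*e) xs)) st xs)" .
  qed
qed

lemma alphas_split:
  assumes "e \<ge> 1" "f \<ge> 1" "c \<le> 1"
  shows "{\<alpha> \<in> alphas (e+f). \<alpha>!(e-1) = c} = (\<lambda>(\<beta>,\<gamma>). \<beta> @ c # \<gamma>) ` (alphas e \<times> alphas f)"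
proof
  show "{\<alpha> \<in> alphas (e+f). \<alpha>!(e-1) = c} \<subseteq> (\<lambda>(\<beta>,\<gamma>). \<beta> @ c # \<gamma>) ` (alphas e \<times> alphas f)"
  proof
    fix \<alpha> assume "\<alpha> \<in> {\<alpha> \<in> alphas (e+f). \<alpha>!(e-1) = c}"
    then have al: "length \<alpha> = e + f - 1" "set \<alpha> \<subseteq> {0,1}" "\<alpha>!(e-1) = c" unfolding alphas_def by auto
    have lt: "e - 1 < length \<alpha>" using al assms by auto
    have eq: "\<alpha> = take (e-1) \<alpha> @ c # drop e \<alpha>"
      using id_take_nth_drop[OF lt] al(3) assms(1) by simp
    have "take (e-1) \<alpha> \<in> alphas e" using al lt unfolding alphas_def by (auto dest: in_set_takeD)
    moreover have "drop e \<alpha> \<in> alphas f" using al lt unfolding alphas_def by (auto dest: in_set_dropD)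
    ultimately show "\<alpha> \<in> (\<lambda>(\<beta>,\<gamma>). \<beta> @ c # \<gamma>) ` (alphas e \<times> alphas f)"
      using eq by (intro image_eqI[of _ _ "(take (e-1) \<alpha>, drop e \<alpha>)"]) auto
  qed
next
  show "(\<lambda>(\<beta>,\<gamma>). \<beta> @ c # \<gamma>) ` (alphas e \<times> alphas f) \<subseteq> {\<alpha> \<in> alphas (e+f). \<alpha>!(e-1) = c}"
  proof
    fix \<alpha> assume "\<alpha> \<in> (\<lambda>(\<beta>,\<gamma>). \<beta> @ c # \<gamma>) ` (alphas e \<times> alphas f)"
    then obtain \<beta> \<gamma> where \<alpha>: "\<alpha> = \<beta> @ c # \<gamma>" "\<beta> \<in> alphas e" "\<gamma> \<in> alphas f" by force
    then show "\<alpha> \<in> {\<alpha> \<in> alphas (e+f). \<alpha>!(e-1) = c}" using assms unfolding alphas_def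
      by (auto simp: nth_append)
  qed
qed

lemma alphas_inj: "inj_on (\<lambda>(\<beta>,\<gamma>). \<beta> @ c # \<gamma>) (alphas e \<times> alphas f)"
  unfolding inj_on_def alphas_def by auto

lemma take_drop_split: "length \<beta> = e - 1 \<Longrightarrow> e \<ge> 1 \<Longrightarrow> take (e-1) (\<beta> @ c # \<gamma>) = \<beta> \<and> drop e (\<beta> @ c # \<gamma>) = \<gamma>"
  by (cases e) auto



lemma sum_split_alphas:
  fixes g :: "nat list \<Rightarrow> nat list \<Rightarrow> 'b::comm_monoid_add"
  assumes "e \<ge> 1" "f \<ge> 1" "c \<le> 1"
  shows "(\<Sum>\<alpha>\<in>alphas (e+f). if \<alpha>!(e-1) = c then g (take (e-1) \<alpha>) (drop e \<alpha>) else 0)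
       = (\<Sum>\<beta>\<in>alphas e. \<Sum>\<gamma>\<in>alphas f. g \<beta> \<gamma>)"
proof -
  let ?P = "\<lambda>(\<beta>::nat list,\<gamma>::nat list). \<beta> @ c # \<gamma>"
  have "(\<Sum>\<alpha>\<in>alphas (e+f). if \<alpha>!(e-1) = c then g (take (e-1) \<alpha>) (drop e \<alpha>) else 0)
      = (\<Sum>\<alpha>\<in>{\<alpha> \<in> alphas (e+f). \<alpha>!(e-1) = c}. g (take (e-1) \<alpha>) (drop e \<alpha>))"
    by (rule sum.inter_filter[symmetric]) (rule finite_alphas)
  also have "\<dots> = (\<Sum>\<alpha>\<in>?P ` (alphas e \<times> alphas f). g (take (e-1) \<alpha>) (drop e \<alpha>))"
    unfolding alphas_split[OF assms] ..
  also have "\<dots> = (\<Sum>x\<in>alphas e \<times> alphas f. g (take (e-1) (?P x)) (drop e (?P x)))"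
    by (rule sum.reindex[OF alphas_inj, unfolded comp_def])
  also have "\<dots> = (\<Sum>(\<beta>,\<gamma>)\<in>alphas e \<times> alphas f. g \<beta> \<gamma>)"
  proof (rule sum.cong[OF refl])
    fix x assume "x \<in> alphas e \<times> alphas f"
    then obtain \<beta> \<gamma> where x: "x = (\<beta>,\<gamma>)" "length \<beta> = e - 1" unfolding alphas_def by auto
    show "g (take (e-1) (?P x)) (drop e (?P x)) = (case x of (\<beta>,\<gamma>) \<Rightarrow> g \<beta> \<gamma>)"
      using take_drop_split[OF x(2) assms(1), of c \<gamma>] x(1) by simp
  qed
  also have "\<dots> = (\<Sum>\<beta>\<in>alphas e. \<Sum>\<gamma>\<in>alphas f. g \<beta> \<gamma>)"
    by (rule sum.cartesian_product[symmetric])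
  finally show ?thesis .
qed

lemma good_prod:
  fixes X Y :: "nat list \<Rightarrow> 'a::field"
  assumes "good n e a c X s1" "good n f c b Y s2" "e \<ge> 1" "f \<ge> 1" "a \<le> 1" "b \<le> 1" "c \<le> 1"
  shows "good n (e+f) a b (tprod (2*e) X Y) (s1 * s2)"
proof -
  obtain XX r1 where 1: "\<And>xs. xs\<in>tdom n (2*e) \<Longrightarrow> X xs = (\<Sum>\<beta>\<in>alphas e. XX \<beta> xs)"
    "\<And>\<beta>. \<beta>\<in>alphas e \<Longrightarrow> dec n (2*e) (Ipart e a \<beta> c) (Jpart e a \<beta> c) (XX \<beta>) (r1 \<beta>)"
    "real (\<Sum>\<beta>\<in>alphas e. r1 \<beta>) \<le> s1" using goodE[OF assms(1)] by blast
  obtain YY r2 where 2: "\<And>xs. xs\<in>tdom n (2*f) \<Longrightarrow> Y xs = (\<Sum>\<gamma>\<in>alphas f. YY \<gamma> xs)"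
    "\<And>\<gamma>. \<gamma>\<in>alphas f \<Longrightarrow> dec n (2*f) (Ipart f c \<gamma> b) (Jpart f c \<gamma> b) (YY \<gamma>) (r2 \<gamma>)"
    "real (\<Sum>\<gamma>\<in>alphas f. r2 \<gamma>) \<le> s2" using goodE[OF assms(2)] by blast
  define Z where "Z = (\<lambda>\<alpha> xs. if \<alpha>!(e-1) = c then tprod (2*e) (XX (take (e-1) \<alpha>)) (YY (drop e \<alpha>)) xs else 0)"
  define rr where "rr = (\<lambda>\<alpha>. if \<alpha>!(e-1) = c then r1 (take (e-1) \<alpha>) * r2 (drop e \<alpha>) else 0)"
  have k2: "2*(e+f) = 2*e + 2*f" by simp
  show ?thesis
  proof (rule goodI[where X=Z and r=rr])
    fix xs assume xs0: "xs \<in> tdom n (2*(e+f))"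
    then have xs: "xs \<in> tdom n (2*e+2*f)" by simp
    have "tprod (2*e) X Y xs = X (take (2*e) xs) * Y (drop (2*e) xs)" unfolding tprod_def by simp
    also have "\<dots> = (\<Sum>\<beta>\<in>alphas e. XX \<beta> (take (2*e) xs)) * (\<Sum>\<gamma>\<in>alphas f. YY \<gamma> (drop (2*e) xs))"
      using 1(1)[OF tdom_take[OF xs]] 2(1)[OF tdom_drop[OF xs]] by simp
    also have "\<dots> = (\<Sum>\<beta>\<in>alphas e. \<Sum>\<gamma>\<in>alphas f. XX \<beta> (take (2*e) xs) * YY \<gamma> (drop (2*e) xs))"
      by (rule sum_product)
    also have "\<dots> = (\<Sum>\<alpha>\<in>alphas (e+f). if \<alpha>!(e-1) = c then XX (take (e-1) \<alpha>) (take (2*e) xs) * YY (drop e \<alpha>) (drop (2*e) xs) else 0)"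
      by (rule sum_split_alphas[OF assms(3,4,7), symmetric])
    also have "\<dots> = (\<Sum>\<alpha>\<in>alphas (e+f). Z \<alpha> xs)"
      unfolding Z_def tprod_def by simp
    finally show "tprod (2*e) X Y xs = (\<Sum>\<alpha>\<in>alphas (e+f). Z \<alpha> xs)" .
  next
    fix \<alpha> assume al: "\<alpha> \<in> alphas (e+f)"
    show "dec n (2*(e+f)) (Ipart (e+f) a \<alpha> b) (Jpart (e+f) a \<alpha> b) (Z \<alpha>) (rr \<alpha>)"
    proof (cases "\<alpha>!(e-1) = c")
      case False
      then have "Z \<alpha> = (\<lambda>_. 0)" "rr \<alpha> = 0" unfolding Z_def rr_def by auto
      then show ?thesis using dec_zero by simp
    next
      case True
      then have "\<alpha> \<in> {\<alpha> \<in> alphas (e+f). \<alpha>!(e-1) = c}" using al by simp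
      then obtain \<beta> \<gamma> where bg: "\<alpha> = \<beta> @ c # \<gamma>" "\<beta> \<in> alphas e" "\<gamma> \<in> alphas f"
        unfolding alphas_split[OF assms(3,4,7)] by force
      have lb: "length \<beta> = e - 1" using bg(2) unfolding alphas_def by simp
      have td: "take (e-1) \<alpha> = \<beta>" "drop e \<alpha> = \<gamma>" using take_drop_split[OF lb assms(3)] bg(1) by auto
      have Z: "Z \<alpha> = tprod (2*e) (XX \<beta>) (YY \<gamma>)" unfolding Z_def using True td by auto
      have R: "rr \<alpha> = r1 \<beta> * r2 \<gamma>" unfolding rr_def using True td by auto
      have h1: "\<forall>p\<in>Ipart e a \<beta> c. p \<in> Ipart (e+f) a \<alpha> b"
      proof
        fix p assume "p \<in> Ipart e a \<beta> c"
        then have p: "p \<in> {1..2*e}" "inI e a \<beta> c p" using Ipart_iff[OF bg(2) assms(5,7)] by auto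
        then have "inI (e+f) a \<alpha> b p" using inI_left[OF assms(3,4) lb p(1)] bg(1) by simp
        then show "p \<in> Ipart (e+f) a \<alpha> b" using Ipart_iff[OF al assms(5,6)] p(1) by auto
      qed
      have h2: "\<forall>p\<in>Jpart e a \<beta> c. p \<in> Jpart (e+f) a \<alpha> b"
      proof
        fix p assume "p \<in> Jpart e a \<beta> c"
        then have p: "p \<in> {1..2*e}" "\<not> inI e a \<beta> c p" using Jpart_iff[OF bg(2) assms(5,7)] by auto
        then have "\<not> inI (e+f) a \<alpha> b p" using inI_left[OF assms(3,4) lb p(1)] bg(1) by simp
        then show "p \<in> Jpart (e+f) a \<alpha> b" using Jpart_iff[OF al assms(5,6)] p(1) by auto
      qed
      have h3: "\<forall>p\<in>Ipart f c \<gamma> b. 2*e+p \<in> Ipart (e+f) a \<alpha> b"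
      proof
        fix p assume "p \<in> Ipart f c \<gamma> b"
        then have p: "p \<in> {1..2*f}" "inI f c \<gamma> b p" using Ipart_iff[OF bg(3) assms(7,6)] by auto
        then have "inI (e+f) a \<alpha> b (2*e+p)" using inI_right[OF assms(3,4) lb p(1)] bg(1) by simp
        then show "2*e+p \<in> Ipart (e+f) a \<alpha> b" using Ipart_iff[OF al assms(5,6)] p(1) by auto
      qed
      have h4: "\<forall>p\<in>Jpart f c \<gamma> b. 2*e+p \<in> Jpart (e+f) a \<alpha> b"
      proof
        fix p assume "p \<in> Jpart f c \<gamma> b"
        then have p: "p \<in> {1..2*f}" "\<not> inI f c \<gamma> b p" using Jpart_iff[OF bg(3) assms(7,6)] by auto
        then have "\<not> inI (e+f) a \<alpha> b (2*e+p)" using inI_right[OF assms(3,4) lb p(1)] bg(1) by simp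
        then show "2*e+p \<in> Jpart (e+f) a \<alpha> b" using Jpart_iff[OF al assms(5,6)] p(1) by auto
      qed
      have "dec n (2*e+2*f) (Ipart (e+f) a \<alpha> b) (Jpart (e+f) a \<alpha> b) (tprod (2*e) (XX \<beta>) (YY \<gamma>)) (r1 \<beta> * r2 \<gamma>)"
        by (rule dec_prod[OF 1(2)[OF bg(2)] 2(2)[OF bg(3)] Ipart_sub Jpart_sub Ipart_sub Jpart_sub h1 h2 h3 h4])
      then show ?thesis unfolding Z R k2 .
    qed
  next
    have "(\<Sum>\<alpha>\<in>alphas (e+f). rr \<alpha>) = (\<Sum>\<beta>\<in>alphas e. \<Sum>\<gamma>\<in>alphas f. r1 \<beta> * r2 \<gamma>)"
      unfolding rr_def by (rule sum_split_alphas[OF assms(3,4,7)])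
    also have "\<dots> = (\<Sum>\<beta>\<in>alphas e. r1 \<beta>) * (\<Sum>\<gamma>\<in>alphas f. r2 \<gamma>)"
      by (rule sum_product[symmetric])
    finally have "real (\<Sum>\<alpha>\<in>alphas (e+f). rr \<alpha>) = real (\<Sum>\<beta>\<in>alphas e. r1 \<beta>) * real (\<Sum>\<gamma>\<in>alphas f. r2 \<gamma>)"
      by simp
    also have "\<dots> \<le> s1 * s2"
    proof -
      have z1: "0 \<le> s1" using 1(3) by (metis of_nat_0_le_iff order_trans)
      show ?thesis by (rule mult_mono[OF 1(3) 2(3) z1]) (simp add: sum_nonneg)
    qed
    finally show "real (\<Sum>\<alpha>\<in>alphas (e+f). rr \<alpha>) \<le> s1 * s2" .
  qed
qed



fun pr :: "nat \<Rightarrow> nat list \<Rightarrow> nat list" where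
  "pr n (x # y # r) = ((x - 1) * n + y) # pr n r"
| "pr n _ = []"

definition unp :: "nat \<Rightarrow> nat \<Rightarrow> nat list" where
  "unp n y = [(y - 1) div n + 1, (y - 1) mod n + 1]"

lemma flatten_unp: "flatten n A ys = A (concat (map (unp n) ys))"
  unfolding flatten_def unp_def by simp

lemma pr_unp1:
  assumes "n \<ge> 1" "x \<in> {1..n}" "y \<in> {1..n}"
  shows "(x - 1) * n + y \<in> {1..n^2}" "unp n ((x - 1) * n + y) = [x, y]"
proof -
  have e: "(x - 1) * n + y - 1 = (y - 1) + n * (x - 1)" using assms by (cases y) (auto simp: mult.commute)
  have "(x - 1) * n + y \<le> (n - 1) * n + n" using assms
    by (intro add_mono mult_right_mono) auto
  also have "\<dots> = n^2" using assms by (simp add: power2_eq_square algebra_simps)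
  finally show "(x - 1) * n + y \<in> {1..n^2}" using assms by auto
  have yl: "y - 1 < n" using assms by auto
  have dm: "\<And>b c. b < (n::nat) \<Longrightarrow> (b + n*c) div n = c \<and> (b + n*c) mod n = b" by simp
  have "((y - 1) + n * (x - 1)) div n = x - 1" using dm[OF yl] by blast
  moreover have "((y - 1) + n * (x - 1)) mod n = y - 1" using dm[OF yl] by blast
  moreover have x1: "1 \<le> x" "1 \<le> y" using assms by auto
  ultimately have A: "((y - 1) + n * (x - 1)) div n + 1 = x" and B: "((y - 1) + n * (x - 1)) mod n + 1 = y"
    by linarith+
  show "unp n ((x - 1) * n + y) = [x, y]" unfolding unp_def e A B by (rule refl)
qed

lemma pr_tdom:
  assumes "n \<ge> 1"
  shows "xs \<in> tdom n (2*k) \<Longrightarrow> pr n xs \<in> tdom (n^2) k \<and> concat (map (unp n) (pr n xs)) = xs"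
proof (induction k arbitrary: xs)
  case 0
  then show ?case unfolding tdom_def by auto
next
  case (Suc k)
  have "length xs = Suc (Suc (2*k))" using Suc.prems unfolding tdom_def by simp
  then obtain x y r where xs: "xs = x # y # r" by (auto simp: length_Suc_conv)
  have r: "r \<in> tdom n (2*k)" and xy: "x \<in> {1..n}" "y \<in> {1..n}" using Suc.prems xs unfolding tdom_def by auto
  have IH: "pr n r \<in> tdom (n^2) k \<and> concat (map (unp n) (pr n r)) = r" using Suc.IH[OF r] .
  show ?case using IH pr_unp1[OF assms xy] xs unfolding tdom_def by auto
qed

lemma unp_tdom:
  assumes "n \<ge> 1"
  shows "ys \<in> tdom (n^2) k \<Longrightarrow> concat (map (unp n) ys) \<in> tdom n (2*k) \<and> pr n (concat (map (unp n) ys)) = ys"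
proof (induction ys arbitrary: k)
  case Nil
  then show ?case unfolding tdom_def by auto
next
  case (Cons y ys)
  then obtain k' where k: "k = Suc k'" unfolding tdom_def by auto
  have ys: "ys \<in> tdom (n^2) k'" and y: "y \<in> {1..n^2}" using Cons.prems k unfolding tdom_def by auto
  have IH: "concat (map (unp n) ys) \<in> tdom n (2*k') \<and> pr n (concat (map (unp n) ys)) = ys" using Cons.IH[OF ys] .
  have "y - 1 < n * n" using y by (auto simp: power2_eq_square)
  then have d: "(y - 1) div n < n" by (simp add: less_mult_imp_div_less)
  have m: "Suc ((y - 1) mod n) \<le> n" using assms by (simp add: Suc_leI)
  have "(y - 1) div n * n + (y - 1) mod n = y - 1" by (rule div_mult_mod_eq)
  then have p: "((y - 1) div n + 1 - 1) * n + ((y - 1) mod n + 1) = y"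
    using y by simp
  show ?case using IH d m p k assms unfolding tdom_def unp_def by auto
qed

lemma take_concat_unp: "take (2*e) (concat (map (unp n) ys)) = concat (map (unp n) (take e ys))"
proof (induction ys arbitrary: e)
  case Nil then show ?case by simp
next
  case (Cons y ys) then show ?case by (cases e) (auto simp: unp_def)
qed

lemma drop_concat_unp: "drop (2*e) (concat (map (unp n) ys)) = concat (map (unp n) (drop e ys))"
proof (induction ys arbitrary: e)
  case Nil then show ?case by simp
next
  case (Cons y ys) then show ?case by (cases e) (auto simp: unp_def)
qed

lemma Lupto_stable: "j < m \<Longrightarrow> Lupto N m j B = Lncsm N j B"
proof (induction m)
  case 0 then show ?case by simp
next
  case (Suc m)
  show ?case
  proof (cases "j < m")
    case True then show ?thesis using Suc by simp
  next
    case False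
    then have "j = m" using Suc.prems by simp
    then show ?thesis unfolding Lncsm_def by simp
  qed
qed

lemma Lncsm_step: "k \<ge> 2 \<Longrightarrow> Lncsm N k B = Inf {\<Sum>i<m. Lupto N k (e i) (Bs i) + Lupto N k (f i) (Cs i) | (m::nat) e f Bs Cs.
                 (\<forall>i<m. 0 < e i \<and> 0 < f i \<and> e i + f i = k) \<and>
                 (\<forall>xs \<in> tdom N k. B xs = (\<Sum>i<m. tprod (e i) (Bs i) (Cs i) xs))}"
  unfolding Lncsm_def by (simp add: Lstep_def)

lemma Lncsm_one: "Lncsm N 1 B = (if \<exists>xs \<in> tdom N 1. B xs \<noteq> 0 then 1 else 0)"
  unfolding Lncsm_def by (simp add: Lstep_def)

lemma g_step:
  assumes "n \<ge> 1" "e \<ge> 1" "k \<le> 2*e" "k \<ge> 1"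
  shows "real n powr log 2 (real k) \<le> real n * real n powr log 2 (real e)"
proof -
  have "log 2 (real k) \<le> log 2 (2 * real e)" using assms by simp
  also have "\<dots> = 1 + log 2 (real e)" using assms by (simp add: log_mult)
  finally have "real n powr log 2 (real k) \<le> real n powr (1 + log 2 (real e))"
    using assms by (intro powr_mono) auto
  also have "\<dots> = real n * real n powr log 2 (real e)" by (simp add: powr_add)
  finally show ?thesis .
qed

lemma bound_lemma:
  assumes "n \<ge> 1" "e \<ge> 1" "f \<ge> 1" "f \<le> e" "L \<ge> 0" "L' \<ge> 0"
  shows "L * real n ^ e / (real n powr log 2 (real e)) * real n ^ (f - 1)
        \<le> (L + L') * real n ^ (e+f) / (real n powr log 2 (real (e+f)))"
proof -
  have g: "real n powr log 2 (real (e+f)) \<le> real n * real n powr log 2 (real e)"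
    by (rule g_step[OF assms(1,2)]) (use assms in auto)
  have pe: "real n powr log 2 (real e) > 0" "real n powr log 2 (real (e+f)) > 0" using assms by auto
  have ef: "e + f = Suc (e + (f - 1))" using assms by simp
  have np: "real n ^ (e+f) = real n * (real n ^ e * real n ^ (f - 1))"
    unfolding ef by (simp add: power_add)
  have "L * real n ^ e / (real n powr log 2 (real e)) * real n ^ (f - 1)
      = L * (real n ^ e * real n ^ (f - 1)) / (real n powr log 2 (real e))" by simp
  also have "\<dots> = L * real n ^ (e+f) / (real n * real n powr log 2 (real e))"
    unfolding np using assms by (simp add: field_simps)
  also have "\<dots> \<le> L * real n ^ (e+f) / (real n powr log 2 (real (e+f)))"
    using g pe assms by (intro divide_left_mono) auto
  also have "\<dots> \<le> (L + L') * real n ^ (e+f) / (real n powr log 2 (real (e+f)))"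
    using assms pe by (intro divide_right_mono mult_right_mono) auto
  finally show ?thesis .
qed



lemma main_lemma:
  fixes A B :: "nat list \<Rightarrow> 'a::field"
  assumes n1: "n \<ge> 1"
  shows "1 \<le> k \<Longrightarrow> (\<forall>ys\<in>tdom (n^2) k. B ys = flatten n A ys) \<Longrightarrow> a \<le> 1 \<Longrightarrow> b \<le> 1 \<Longrightarrow>
    good n k a b A (real (Lncsm (n^2) k B) * real n ^ k / (real n powr log 2 (real k)))"
proof (induction k arbitrary: A B a b rule: less_induct)
  case (less k)
  show ?case
  proof (cases "k = 1")
    case True
    have g1: "real n powr log 2 (real k) = 1" using True n1 by simp
    show ?thesis
    proof (cases "\<exists>xs \<in> tdom (n^2) 1. B xs \<noteq> 0")
      case nz: True
      then have "Lncsm (n^2) k B = 1" using True Lncsm_one[of "n^2" B] by auto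
      then have "real (Lncsm (n^2) k B) * real n ^ k / (real n powr log 2 (real k)) = real n"
        using g1 True by simp
      then show ?thesis using good_base[OF n1 less.prems(3,4), of A] True by simp
    next
      case z: False
      then have "Lncsm (n^2) k B = 0" using True Lncsm_one[of "n^2" B] by auto
      then have s0: "real (Lncsm (n^2) k B) * real n ^ k / (real n powr log 2 (real k)) = 0" by simp
      have "good n k a b A 0"
      proof (rule good_cong[OF good_zero])
        fix xs assume xs: "xs \<in> tdom n (2*k)"
        then have xs1: "xs \<in> tdom n (2*1)" using True by simp
        have p: "pr n xs \<in> tdom (n^2) 1" "concat (map (unp n) (pr n xs)) = xs" using pr_tdom[OF n1 xs1] by auto
        have "A xs = flatten n A (pr n xs)" using p(2) by (simp add: flatten_unp)
        also have "\<dots> = B (pr n xs)" using less.prems(2) p(1) True by simp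
        also have "\<dots> = 0" using z p(1) by auto
        finally show "0 = A xs" by simp
      qed
      then show ?thesis by (simp only: s0)
    qed
  next
    case False
    then have k2: "k \<ge> 2" using less.prems(1) by simp
    define N where "N = n^2"
    define g where "g = (\<lambda>j::nat. real n powr log 2 (real j))"
    have gpos: "g j > 0" for j unfolding g_def using n1 by simp
    let ?S = "{\<Sum>i<m. Lupto N k (e i) (Bs i) + Lupto N k (f i) (Cs i) | (m::nat) e f Bs Cs.
                 (\<forall>i<m. 0 < e i \<and> 0 < f i \<and> e i + f i = k) \<and>
                 (\<forall>xs \<in> tdom N k. B xs = (\<Sum>i<m. tprod (e i) (Bs i) (Cs i) xs))}"
    have ne: "?S \<noteq> {}"
    proof -
      define Bs0 :: "nat \<Rightarrow> nat list \<Rightarrow> 'a" where "Bs0 = (\<lambda>i ys. if ys = [Suc i] then 1 else 0)"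
      define Cs0 :: "nat \<Rightarrow> nat list \<Rightarrow> 'a" where "Cs0 = (\<lambda>i ys. B (Suc i # ys))"
      have "\<forall>xs \<in> tdom N k. B xs = (\<Sum>i<N. tprod ((\<lambda>_. 1) i) (Bs0 i) (Cs0 i) xs)"
      proof
        fix xs assume xs: "xs \<in> tdom N k"
        then obtain x r where xr: "xs = x # r" "x \<in> {1..N}" unfolding tdom_def using k2
          by (cases xs) auto
        have "(\<Sum>i<N. tprod 1 (Bs0 i) (Cs0 i) xs) = (\<Sum>i<N. if i = x - 1 then B xs else 0)"
        proof (rule sum.cong[OF refl])
          fix i assume "i \<in> {..<N}"
          show "tprod 1 (Bs0 i) (Cs0 i) xs = (if i = x - 1 then B xs else 0)"
            unfolding tprod_def Bs0_def Cs0_def using xr by auto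
        qed
        also have "\<dots> = B xs"
        proof -
          have xm: "x - 1 < N" using xr(2) by auto
          then show ?thesis by simp
        qed
        finally show "B xs = (\<Sum>i<N. tprod ((\<lambda>_. 1) i) (Bs0 i) (Cs0 i) xs)" by simp
      qed
      moreover have "\<forall>i<N. 0 < (\<lambda>_. 1::nat) i \<and> 0 < (\<lambda>_. k - 1) i \<and> (\<lambda>_. 1) i + (\<lambda>_. k - 1) i = k"
        using k2 by simp
      ultimately have "(\<Sum>i<N. Lupto N k ((\<lambda>_. 1) i) (Bs0 i) + Lupto N k ((\<lambda>_. k - 1) i) (Cs0 i)) \<in> ?S"
        apply -
        apply (rule CollectI)
        apply (rule exI[of _ N])
        apply (rule exI[of _ "\<lambda>_. 1::nat"])
        apply (rule exI[of _ "\<lambda>_. k - 1"])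
        apply (rule exI[of _ Bs0])
        apply (rule exI[of _ Cs0])
        apply (rule conjI, rule refl, rule conjI, assumption, assumption)
        done
      then show ?thesis by blast
    qed
    have "Lncsm N k B = Inf ?S" using Lncsm_step[OF k2] by simp
    then have "Lncsm N k B \<in> ?S" using Inf_nat_def1[OF ne] by simp
    then have "\<exists>(m::nat) e f Bs Cs. Lncsm N k B = (\<Sum>i<m. Lupto N k (e i) (Bs i) + Lupto N k (f i) (Cs i)) \<and>
                 (\<forall>i<m. 0 < e i \<and> 0 < f i \<and> e i + f i = k) \<and>
                 (\<forall>xs \<in> tdom N k. B xs = (\<Sum>i<m. tprod (e i) (Bs i) (Cs i) xs))"
      by (simp only: mem_Collect_eq)
    then obtain m :: nat and e f Bs Cs where pr1: "\<forall>i<m. 0 < e i \<and> 0 < f i \<and> e i + f i = k"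
      and pr2: "\<forall>xs \<in> tdom N k. B xs = (\<Sum>i<m. tprod (e i) (Bs i) (Cs i) xs)"
      and Leq: "Lncsm N k B = (\<Sum>i<m. Lupto N k (e i) (Bs i) + Lupto N k (f i) (Cs i))" by blast
    have Leq2: "Lncsm N k B = (\<Sum>i<m. Lncsm N (e i) (Bs i) + Lncsm N (f i) (Cs i))"
      unfolding Leq
    proof (rule sum.cong[OF refl])
      fix i assume "i \<in> {..<m}"
      then have "e i < k" "f i < k" using pr1 by auto
      then show "Lupto N k (e i) (Bs i) + Lupto N k (f i) (Cs i) = Lncsm N (e i) (Bs i) + Lncsm N (f i) (Cs i)"
        by (simp add: Lupto_stable)
    qed
    define A1 where "A1 = (\<lambda>i xs. Bs i (pr n xs))"
    define A2 where "A2 = (\<lambda>i xs. Cs i (pr n xs))"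
    have fl1: "\<forall>ys\<in>tdom (n^2) j. Bs i ys = flatten n (A1 i) ys" for i j
      unfolding A1_def flatten_unp using unp_tdom[OF n1] by simp
    have fl2: "\<forall>ys\<in>tdom (n^2) j. Cs i ys = flatten n (A2 i) ys" for i j
      unfolding A2_def flatten_unp using unp_tdom[OF n1] by simp
    have tm: "good n k a b (tprod (2 * e i) (A1 i) (A2 i))
        ((real (Lncsm N (e i) (Bs i)) + real (Lncsm N (f i) (Cs i))) * real n ^ k / g k)" if im: "i < m" for i
    proof -
      have ef: "0 < e i" "0 < f i" "e i + f i = k" using pr1 im by auto
      then have e1: "1 \<le> e i" "1 \<le> f i" "e i < k" "f i < k" by auto
      have ab: "a \<le> 1" "b \<le> 1" using less.prems by auto
      show ?thesis
      proof (cases "f i \<le> e i")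
        case True
        have g1: "good n (e i) a (1-b) (A1 i) (real (Lncsm N (e i) (Bs i)) * real n ^ (e i) / g (e i))"
          unfolding g_def N_def by (rule less.IH[OF e1(3) e1(1) fl1]) (use ab in auto)
        have g2: "good n (f i) (1-b) b (A2 i) (real n ^ (f i - 1))"
          by (rule good_trivial[OF n1]) (use ab in auto)
        have "good n (e i + f i) a b (tprod (2 * e i) (A1 i) (A2 i))
            (real (Lncsm N (e i) (Bs i)) * real n ^ (e i) / g (e i) * real n ^ (f i - 1))"
          by (rule good_prod[OF g1 g2 e1(1,2) ab]) simp
        moreover have "real (Lncsm N (e i) (Bs i)) * real n ^ (e i) / g (e i) * real n ^ (f i - 1)
            \<le> (real (Lncsm N (e i) (Bs i)) + real (Lncsm N (f i) (Cs i))) * real n ^ (e i + f i) / g (e i + f i)"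
          unfolding g_def by (rule bound_lemma[OF n1 e1(1,2) True]) auto
        ultimately have "good n (e i + f i) a b (tprod (2 * e i) (A1 i) (A2 i))
          ((real (Lncsm N (e i) (Bs i)) + real (Lncsm N (f i) (Cs i))) * real n ^ (e i + f i) / g (e i + f i))"
          by (rule good_mono)
        then show ?thesis using ef(3) by simp
      next
        case False
        then have FE: "e i \<le> f i" by simp
        have g1: "good n (e i) a (1-a) (A1 i) (real n ^ (e i - 1))"
          by (rule good_trivial[OF n1]) (use ab in auto)
        have g2: "good n (f i) (1-a) b (A2 i) (real (Lncsm N (f i) (Cs i)) * real n ^ (f i) / g (f i))"
          unfolding g_def N_def by (rule less.IH[OF e1(4) e1(2) fl2]) (use ab in auto)
        have "good n (e i + f i) a b (tprod (2 * e i) (A1 i) (A2 i))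
            (real n ^ (e i - 1) * (real (Lncsm N (f i) (Cs i)) * real n ^ (f i) / g (f i)))"
          by (rule good_prod[OF g1 g2 e1(1,2) ab]) simp
        moreover have "real (Lncsm N (f i) (Cs i)) * real n ^ (f i) / g (f i) * real n ^ (e i - 1)
            \<le> (real (Lncsm N (f i) (Cs i)) + real (Lncsm N (e i) (Bs i))) * real n ^ (f i + e i) / g (f i + e i)"
          unfolding g_def by (rule bound_lemma[OF n1 e1(2,1) FE]) auto
        then have "real n ^ (e i - 1) * (real (Lncsm N (f i) (Cs i)) * real n ^ (f i) / g (f i))
            \<le> (real (Lncsm N (e i) (Bs i)) + real (Lncsm N (f i) (Cs i))) * real n ^ (e i + f i) / g (e i + f i)"
          by (simp add: add.commute mult.commute)
        ultimately have "good n (e i + f i) a b (tprod (2 * e i) (A1 i) (A2 i))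
          ((real (Lncsm N (e i) (Bs i)) + real (Lncsm N (f i) (Cs i))) * real n ^ (e i + f i) / g (e i + f i))"
          by (rule good_mono)
        then show ?thesis using ef(3) by simp
      qed
    qed
    have gs: "good n k a b (\<lambda>xs. \<Sum>i<m. tprod (2 * e i) (A1 i) (A2 i) xs)
        (\<Sum>i<m. (real (Lncsm N (e i) (Bs i)) + real (Lncsm N (f i) (Cs i))) * real n ^ k / g k)"
      by (rule good_sum) (use tm in auto)
    have sumeq: "(\<Sum>i<m. (real (Lncsm N (e i) (Bs i)) + real (Lncsm N (f i) (Cs i))) * real n ^ k / g k)
        = real (Lncsm N k B) * real n ^ k / g k"
      unfolding Leq2 by (simp add: sum_divide_distrib[symmetric] sum_distrib_right[symmetric])
    have cong: "(\<Sum>i<m. tprod (2 * e i) (A1 i) (A2 i) xs) = A xs" if xs: "xs \<in> tdom n (2*k)" for xs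
    proof -
      define ys where "ys = pr n xs"
      have ys: "ys \<in> tdom N k" "concat (map (unp n) ys) = xs" using pr_tdom[OF n1 xs] unfolding ys_def N_def by auto
      have "A xs = flatten n A ys" using ys(2) by (simp add: flatten_unp)
      also have "\<dots> = B ys" using less.prems(2) ys(1) unfolding N_def by simp
      also have "\<dots> = (\<Sum>i<m. tprod (e i) (Bs i) (Cs i) ys)" using pr2 ys(1) by simp
      also have "\<dots> = (\<Sum>i<m. tprod (2 * e i) (A1 i) (A2 i) xs)"
      proof (rule sum.cong[OF refl])
        fix i assume "i \<in> {..<m}"
        then have ef: "e i + f i = k" using pr1 by auto
        have yk: "ys \<in> tdom N (e i + f i)" using ys(1) ef by simp
        have t: "take (e i) ys \<in> tdom N (e i)" by (rule tdom_take[OF yk]) simp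
        have d: "drop (e i) ys \<in> tdom N (f i)" by (rule tdom_drop[OF yk])
        have "pr n (take (2 * e i) xs) = take (e i) ys"
          using unp_tdom[OF n1, of "take (e i) ys" "e i"] t unfolding N_def
          by (simp add: ys(2)[symmetric] take_concat_unp)
        moreover have "pr n (drop (2 * e i) xs) = drop (e i) ys"
          using unp_tdom[OF n1, of "drop (e i) ys" "f i"] d unfolding N_def
          by (simp add: ys(2)[symmetric] drop_concat_unp)
        ultimately show "tprod (e i) (Bs i) (Cs i) ys = tprod (2 * e i) (A1 i) (A2 i) xs"
          unfolding tprod_def A1_def A2_def by simp
      qed
      finally show ?thesis by simp
    qed
    have "good n k a b A (real (Lncsm N k B) * real n ^ k / g k)"
      using good_cong[OF gs cong] sumeq by simp
    then show ?thesis unfolding N_def g_def .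
  qed
qed

theorem theorem4p11:
  fixes A :: "nat list \<Rightarrow> 'a::field" and n d :: nat
  assumes "n \<ge> 1" and "d \<ge> 1"
  shows "real (Lncsm (n^2) d (flatten n A)) \<ge> real n powr log 2 (real d) * rho n d A"
proof -
  define L where "L = real (Lncsm (n^2) d (flatten n A))"
  define g where "g = real n powr log 2 (real d)"
  have gpos: "g > 0" unfolding g_def using assms by simp
  have npos: "real n ^ d > 0" using assms by simp
  have bound: "(INF X\<in>{X :: nat list \<Rightarrow> nat list \<Rightarrow> 'a. \<forall>xs \<in> tdom n (2*d). A xs = (\<Sum>\<alpha> \<in> alphas d. X \<alpha> xs)}.
        \<Sum>\<alpha> \<in> alphas d. relrk n d a \<alpha> b (X \<alpha>)) \<le> L / g" if ab: "a \<le> 1" "b \<le> 1" for a b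
  proof -
    have "good n d a b A (L * real n ^ d / g)"
      unfolding L_def g_def by (rule main_lemma[OF assms(1) assms(2) _ ab]) simp
    then obtain X r where X: "\<And>xs. xs\<in>tdom n (2*d) \<Longrightarrow> A xs = (\<Sum>\<alpha>\<in>alphas d. X \<alpha> xs)"
      "\<And>\<alpha>. \<alpha>\<in>alphas d \<Longrightarrow> dec n (2*d) (Ipart d a \<alpha> b) (Jpart d a \<alpha> b) (X \<alpha>) (r \<alpha>)"
      "real (\<Sum>\<alpha>\<in>alphas d. r \<alpha>) \<le> L * real n ^ d / g" using goodE by blast
    have Xin: "X \<in> {X :: nat list \<Rightarrow> nat list \<Rightarrow> 'a. \<forall>xs \<in> tdom n (2*d). A xs = (\<Sum>\<alpha> \<in> alphas d. X \<alpha> xs)}"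
      using X(1) by blast
    have "(INF X\<in>{X :: nat list \<Rightarrow> nat list \<Rightarrow> 'a. \<forall>xs \<in> tdom n (2*d). A xs = (\<Sum>\<alpha> \<in> alphas d. X \<alpha> xs)}.
        \<Sum>\<alpha> \<in> alphas d. relrk n d a \<alpha> b (X \<alpha>)) \<le> (\<Sum>\<alpha> \<in> alphas d. relrk n d a \<alpha> b (X \<alpha>))"
    proof (rule cINF_lower[OF _ Xin])
      show "bdd_below ((\<lambda>X. \<Sum>\<alpha> \<in> alphas d. relrk n d a \<alpha> b (X \<alpha>)) ` {X :: nat list \<Rightarrow> nat list \<Rightarrow> 'a. \<forall>xs \<in> tdom n (2*d). A xs = (\<Sum>\<alpha> \<in> alphas d. X \<alpha> xs)})"
        by (rule bdd_belowI2[of _ 0]) (simp add: sum_nonneg relrk_def)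
    qed
    also have "\<dots> \<le> (\<Sum>\<alpha> \<in> alphas d. real (r \<alpha>) / real n ^ d)"
    proof (rule sum_mono)
      fix \<alpha> assume al: "\<alpha> \<in> alphas d"
      have "mrank (Mat_flat n (2*d) (Ipart d a \<alpha> b) (Jpart d a \<alpha> b) (X \<alpha>)) \<le> r \<alpha>"
        by (rule dec_mrank[OF assms(1) X(2)[OF al] Ipart_sub Jpart_sub IJ_disj[OF al ab]])
      then show "relrk n d a \<alpha> b (X \<alpha>) \<le> real (r \<alpha>) / real n ^ d"
        unfolding relrk_def using npos by (simp add: divide_right_mono)
    qed
    also have "\<dots> = real (\<Sum>\<alpha>\<in>alphas d. r \<alpha>) / real n ^ d" by (simp add: sum_divide_distrib)
    also have "\<dots> \<le> (L * real n ^ d / g) / real n ^ d" by (rule divide_right_mono[OF X(3)]) (use npos in simp)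
    also have "\<dots> = L / g" using npos by simp
    finally show ?thesis .
  qed
  have inner: "(MAX b \<in> {0, 1}. (INF X\<in>{X :: nat list \<Rightarrow> nat list \<Rightarrow> 'a. \<forall>xs \<in> tdom n (2*d). A xs = (\<Sum>\<alpha> \<in> alphas d. X \<alpha> xs)}.
        \<Sum>\<alpha> \<in> alphas d. relrk n d a \<alpha> b (X \<alpha>))) \<le> L / g" if a: "a \<le> 1" for a
    by (rule Max.boundedI) (use bound[OF a] in auto)
  have "rho n d A \<le> L / g"
    unfolding rho_def by (rule Max.boundedI) (use inner in auto)
  then have "g * rho n d A \<le> g * (L / g)" by (rule mult_left_mono) (use gpos in simp)
  also have "\<dots> = L" using gpos by simp
  finally show ?thesis unfolding L_def g_def .
qed

end
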